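(* Let $f(x,u)=g(x)+h(x)u$ with $g:\mathbb{R}^n\to\mathbb{R}^n$, $h:\mathbb{R}^n\to\mathbb{R}^{n\times m}$ smooth, and let $\mu:\mathbb{R}^n\to\mathbb{R}^m$ be a smooth feedback policy. Fix $t_0<t_f$, an initial state $x(t_0)$, and let $x(t)$, $t\in[t_0,t_f]$, be the nominal trajectory solving $\dot x(t)=f(x(t),\mu(x(t)))$. Fix a time $\tau\in(t_0,t_f)$ and an arbitrary continuous control signal $\mu_\star:[t_0,t_f]\to\mathbb{R}^m$. For $\lambda\ge 0$ small, let $x_\lambda(t)$ be the trajectory from the same initial condition $x(t_0)$ that uses the control $\mu(x)$ on $[t_0,\tau)$, the control $\mu_\star(t)$ on $[\tau,\tau+\lambda)$, and the control $\mu(x)$ on $[\tau+\lambda,t_f]$. Define $$D_{\mathrm{KL}}(\lambda)=-\sum_{i=1}^N p(s_i)\log q_\lambda(s_i),\qquad q_\lambda(s)=\frac{1}{t_f-t_0}\int_{t_0}^{t_f}\psi(s\mid x_\lambda(t))\,dt,$$ and write $q=q_0$ (the time-averaged statistics of the nominal trajectory). Then the sensitivity of $D_{\mathrm{KL}}$ to the switching duration $\lambda$ (evaluated as $\lambda\to 0^+$) is $$\frac{\partial D_{\mathrm{KL}}}{\partial\lambda}=\rho(\tau)^\top\big(f(x(\tau),\mu_\star(\tau))-f(x(\tau),\mu(x(\tau)))\big),$$ where $\rho:[t_0,t_f]\to\mathbb{R}^n$ is the solution of the terminal-value problem $$\dot\rho(t)=\frac{1}{t_f-t_0}\sum_{i=1}^N\frac{p(s_i)}{q(s_i)}\frac{\partial\psi(s_i\mid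 x)}{\partial x}\Big|_{x=x(t)}-\Big(\frac{\partial f}{\partial x}+\frac{\partial f}{\partial u}\frac{\partial\mu}{\partial x}\Big)^\top\rho(t),\qquad \rho(t_f)=\mathbf{0},$$ with the Jacobians evaluated at $(x(t),\mu(x(t)))$.
   Context: The robot state is $x\in\mathbb{R}^n$; a search domain $\mathcal{S}^v$ ($v\le n+m$) is given and $\bar x$ denotes the component of the state lying in the search domain. $p$ is a probability density on $\mathcal{S}^v$ and $s_1,\dots,s_N\in\mathcal{S}^v$ are fixed sample points. $\Sigma\in\mathbb{R}^{v\times v}$ is positive definite, $\eta>0$ a normalization constant, and $\psi(s\mid x)=\frac{1}{\eta}\exp\!\big[-\tfrac12\|s-\bar x\|^2_{\Sigma^{-1}}\big]$, where $\|y\|^2_{A}=y^\top A y$. *)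

theory Defs
  imports "HOL-Analysis.Analysis"
begin

definition grad :: "(real^'n \<Rightarrow> real) \<Rightarrow> real^'n \<Rightarrow> real^'n" where
  "grad F x = (\<chi> i. frechet_derivative F (at x) (axis i 1))"

fun Ck :: "nat \<Rightarrow> (real^'n \<Rightarrow> real) \<Rightarrow> bool" where
  "Ck 0 F = continuous_on UNIV F"
| "Ck (Suc k) F = (continuous_on UNIV F \<and> (\<forall>x. F differentiable (at x)) \<and>
      (\<forall>i. Ck k (\<lambda>x. frechet_derivative F (at x) (axis i 1))))"

definition smooth_scalar :: "(real^'n \<Rightarrow> real) \<Rightarrow> bool" where
  "smooth_scalar F = (\<forall>k. Ck k F)"

definition smooth_vec :: "(real^'n \<Rightarrow> real^'m) \<Rightarrow> bool" where
  "smooth_vec F = (\<forall>j. smooth_scalar (\<lambda>x. F x $ j))"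

definition smooth_mat :: "(real^'n \<Rightarrow> real^'m^'k) \<Rightarrow> bool" where
  "smooth_mat F = (\<forall>i j. smooth_scalar (\<lambda>x. F x $ i $ j))"

definition pos_def :: "real^'v^'v \<Rightarrow> bool" where
  "pos_def S = (transpose S = S \<and> (\<forall>y. y \<noteq> 0 \<longrightarrow> y \<bullet> (S *v y) > 0))"

text \<open>Gaussian sensor model psi(s | x) = exp(-1/2 |s - xbar|^2_{Sig^-1}) / eta,
  where xbar = proj x is the component of the state in the search domain.\<close>
definition psi :: "real \<Rightarrow> real^'v^'v \<Rightarrow> (real^'n \<Rightarrow> real^'v) \<Rightarrow> real^'v \<Rightarrow> real^'n \<Rightarrow> real" where
  "psi eta Sig proj s x =
     (1 / eta) * exp (-(1/2) * ((s - proj x) \<bullet> (matrix_inv Sig *v (s - proj x))))"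

definition qstat :: "real \<Rightarrow> real \<Rightarrow> (real^'v \<Rightarrow> real^'n \<Rightarrow> real) \<Rightarrow> (real \<Rightarrow> real^'n) \<Rightarrow> real^'v \<Rightarrow> real" where
  "qstat t0 tf ps traj s = (1 / (tf - t0)) * integral {t0..tf} (\<lambda>t. ps s (traj t))"

definition DKL :: "nat \<Rightarrow> (nat \<Rightarrow> real^'v) \<Rightarrow> (real^'v \<Rightarrow> real) \<Rightarrow> (real^'v \<Rightarrow> real) \<Rightarrow> real" where
  "DKL N smp p q = - (\<Sum>i\<in>{1..N}. p (smp i) * ln (q (smp i)))"

end

theory Submission
  imports Defs
begin

lemma has_derivative_vec_lambdaI:
  fixes F :: "'a::real_normed_vector \<Rightarrow> real^'n"
  assumes "\<And>j. ((\<lambda>x. F x $ j) has_derivative (\<lambda>v. F' v $ j)) (at a)"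
  shows "(F has_derivative F') (at a)"
  using assms
  by (subst has_derivative_componentwise_within) (auto simp: Basis_vec_def cart_eq_inner_axis)

lemma linear_real_inner_form:
  fixes L :: "real^'n \<Rightarrow> real"
  assumes "linear L"
  shows "L v = (\<chi> i. L (axis i 1)) \<bullet> v"
proof -
  have "L v = L (\<Sum>i\<in>UNIV. v $ i *\<^sub>R axis i 1)"
    using basis_expansion[of v] by (simp add: scalar_mult_eq_scaleR)
  also have "\<dots> = (\<Sum>i\<in>UNIV. v $ i * L (axis i 1))"
    using assms by (simp add: linear_sum linear_scale)
  also have "\<dots> = (\<chi> i. L (axis i 1)) \<bullet> v"
    by (simp add: inner_vec_def mult.commute)
  finally show ?thesis .
qed

definition C1 :: "(real^'n \<Rightarrow> real) \<Rightarrow> (real^'n \<Rightarrow> real^'n) \<Rightarrow> bool" where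
  "C1 \<phi> D \<longleftrightarrow> (\<forall>y. (\<phi> has_derivative (\<lambda>v. D y \<bullet> v)) (at y)) \<and> continuous_on UNIV D"

lemma C1_of_linear_form:
  fixes \<phi> :: "real^'n \<Rightarrow> real"
  assumes "\<And>y. (\<phi> has_derivative L y) (at y)"
    and "\<And>i. continuous_on UNIV (\<lambda>y. L y (axis i 1))"
  shows "C1 \<phi> (\<lambda>y. \<chi> i. L y (axis i 1))"
  unfolding C1_def
proof (intro conjI allI)
  fix y
  have "L y = (\<lambda>v. (\<chi> i. L y (axis i 1)) \<bullet> v)"
    by (rule ext) (rule linear_real_inner_form[OF has_derivative_linear[OF assms(1)]])
  then show "(\<phi> has_derivative (\<lambda>v. (\<chi> i. L y (axis i 1)) \<bullet> v)) (at y)"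
    using assms(1)[of y] by simp
next
  show "continuous_on UNIV (\<lambda>y. \<chi> i. L y (axis i 1))"
    by (intro continuous_on_vec_lambda assms(2))
qed

lemma C1_grad:
  assumes "C1 \<phi> D" shows "grad \<phi> = D"
proof (rule ext)
  fix y
  have "frechet_derivative \<phi> (at y) = (\<lambda>v. D y \<bullet> v)"
    using assms unfolding C1_def by (metis frechet_derivative_at)
  then show "grad \<phi> y = D y"
    by (simp add: grad_def inner_axis vec_eq_iff)
qed

lemma C1_smooth:
  assumes "smooth_scalar \<phi>" shows "C1 \<phi> (grad \<phi>)"
proof -
  have ck: "Ck (Suc 0) \<phi>" using assms unfolding smooth_scalar_def by blast
  have d: "\<And>y. (\<phi> has_derivative frechet_derivative \<phi> (at y)) (at y)"
    using ck by (simp add: frechet_derivative_works[symmetric])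
  have c: "\<And>i. continuous_on UNIV (\<lambda>y. frechet_derivative \<phi> (at y) (axis i 1))"
    using ck by simp
  show ?thesis
    using C1_of_linear_form[OF d c] by (simp add: grad_def[abs_def])
qed

lemma C1_cont: "C1 \<phi> D \<Longrightarrow> continuous_on UNIV \<phi>"
  unfolding C1_def
  by (meson continuous_at_imp_continuous_on has_derivative_continuous)

lemma C1_add:
  assumes "C1 a Da" "C1 b Db"
  shows "C1 (\<lambda>y. a y + b y) (\<lambda>y. Da y + Db y)"
  using assms unfolding C1_def
  by (auto intro!: continuous_intros has_derivative_eq_rhs[OF has_derivative_add] simp: inner_add_left)

lemma C1_const: "C1 (\<lambda>y. c) (\<lambda>y. 0)"
proof -
  have "((\<lambda>y. c) has_derivative (\<lambda>v. (0::real^'n) \<bullet> v)) (at y)" for y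
    by (rule has_derivative_eq_rhs[OF has_derivative_const]) (simp add: fun_eq_iff)
  then show ?thesis unfolding C1_def using continuous_on_const by blast
qed

lemma C1_mult:
  assumes "C1 a Da" "C1 b Db"
  shows "C1 (\<lambda>y. a y * b y) (\<lambda>y. a y *\<^sub>R Db y + b y *\<^sub>R Da y)"
proof -
  have ca: "continuous_on UNIV a" and cb: "continuous_on UNIV b"
    using assms C1_cont by blast+
  show ?thesis
    using assms ca cb unfolding C1_def
    by (auto intro!: continuous_intros has_derivative_eq_rhs[OF has_derivative_mult]
        simp: inner_add_left algebra_simps)
qed

lemma C1_sum:
  assumes "finite S" "\<And>k. k \<in> S \<Longrightarrow> C1 (a k) (Da k)"
  shows "C1 (\<lambda>y. \<Sum>k\<in>S. a k y) (\<lambda>y. \<Sum>k\<in>S. Da k y)"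
  using assms
proof (induction S rule: finite_induct)
  case empty
  then show ?case using C1_const[of 0] by simp
next
  case (insert k S)
  then show ?case using C1_add[of "a k" "Da k"] by simp
qed

lemma C1_bounds:
  fixes \<phi> :: "real^'n \<Rightarrow> real"
  assumes C: "C1 \<phi> D" and K: "compact K"
  shows "\<exists>L\<ge>0. \<forall>y\<in>K. \<forall>z. norm (z - y) \<le> 1 \<longrightarrow> \<bar>\<phi> z - \<phi> y\<bar> \<le> L * norm (z - y)"
    and "\<forall>\<epsilon>>0. \<exists>\<delta>>0. \<forall>y\<in>K. \<forall>z. norm (z - y) < \<delta> \<longrightarrow>
            \<bar>\<phi> z - \<phi> y - D y \<bullet> (z - y)\<bar> \<le> \<epsilon> * norm (z - y)"
proof -
  define K1 where "K1 = {a + b |a b. a \<in> K \<and> b \<in> cball (0::real^'n) 1}"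
  have K1: "compact K1" unfolding K1_def by (intro compact_sums K compact_cball)
  have inK1: "z \<in> K1" if "y \<in> K" "norm (z - y) \<le> 1" for y z
  proof -
    have "z = y + (z - y)" by simp
    moreover have "z - y \<in> cball 0 1" using that by simp
    ultimately show ?thesis unfolding K1_def using that(1) by blast
  qed
  have der: "(\<phi> has_derivative (\<lambda>v. D w \<bullet> v)) (at w within S)" for w S
    using C unfolding C1_def by (blast intro: has_derivative_at_withinI)
  have Dc: "continuous_on K1 D" using C unfolding C1_def by (blast intro: continuous_on_subset)
  have onb: "onorm (\<lambda>v. a \<bullet> v) \<le> norm a" for a :: "real^'n"
    by (rule onorm_le) (simp add: Cauchy_Schwarz_ineq2 real_norm_def)
  obtain B where B: "\<forall>w\<in>K1. norm (D w) \<le> B"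
    using compact_imp_bounded[OF compact_continuous_image[OF Dc K1]] by (auto simp: bounded_iff)
  show "\<exists>L\<ge>0. \<forall>y\<in>K. \<forall>z. norm (z - y) \<le> 1 \<longrightarrow> \<bar>\<phi> z - \<phi> y\<bar> \<le> L * norm (z - y)"
  proof (intro exI[of _ "max B 0"] conjI ballI allI impI)
    fix y z assume y: "y \<in> K" and z: "norm (z - y) \<le> 1"
    have "norm (\<phi> z - \<phi> y) \<le> max B 0 * norm (z - y)"
    proof (rule differentiable_bound[of "cball y 1"])
      show "convex (cball y 1)" by simp
      show "(\<phi> has_derivative (\<lambda>v. D w \<bullet> v)) (at w within cball y 1)" for w by (rule der)
      show "onorm (\<lambda>v. D w \<bullet> v) \<le> max B 0" if "w \<in> cball y 1" for w
      proof -
        have "w \<in> K1" using inK1[OF y, of w] that by (simp add: dist_norm norm_minus_commute)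
        then show ?thesis using onb[of "D w"] B by force
      qed
      show "z \<in> cball y 1" "y \<in> cball y 1" using z by (auto simp: dist_norm norm_minus_commute)
    qed
    then show "\<bar>\<phi> z - \<phi> y\<bar> \<le> max B 0 * norm (z - y)" by simp
  qed simp
  show "\<forall>\<epsilon>>0. \<exists>\<delta>>0. \<forall>y\<in>K. \<forall>z. norm (z - y) < \<delta> \<longrightarrow>
            \<bar>\<phi> z - \<phi> y - D y \<bullet> (z - y)\<bar> \<le> \<epsilon> * norm (z - y)"
  proof (intro allI impI)
    fix \<epsilon> :: real assume e: "\<epsilon> > 0"
    obtain d where d: "d > 0" "\<forall>w\<in>K1. \<forall>w'\<in>K1. dist w' w < d \<longrightarrow> dist (D w') (D w) < \<epsilon>"
      using compact_uniformly_continuous[OF Dc K1] e unfolding uniformly_continuous_on_def by metis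
    show "\<exists>\<delta>>0. \<forall>y\<in>K. \<forall>z. norm (z - y) < \<delta> \<longrightarrow>
            \<bar>\<phi> z - \<phi> y - D y \<bullet> (z - y)\<bar> \<le> \<epsilon> * norm (z - y)"
    proof (intro exI[of _ "min d 1"] conjI ballI allI impI)
      show "min d 1 > 0" using d by simp
      fix y z assume y: "y \<in> K" and z: "norm (z - y) < min d 1"
      have yK1: "y \<in> K1" using inK1[OF y, of y] by simp
      have "norm (\<phi> z - \<phi> y - D y \<bullet> (z - y)) \<le> norm (z - y) * \<epsilon>"
      proof (rule differentiable_bound_linearization[of y z "ball y (min d 1)" \<phi> "\<lambda>w v. D w \<bullet> v" y])
        show "y + t *\<^sub>R (z - y) \<in> ball y (min d 1)" if "t \<in> {0..1}" for t
        proof -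
          have "norm (t *\<^sub>R (z - y)) \<le> norm (z - y)" using that by (auto intro: mult_left_le_one_le)
          then show ?thesis using z by (simp add: dist_norm)
        qed
        show "(\<phi> has_derivative (\<lambda>v. D w \<bullet> v)) (at w within ball y (min d 1))" for w by (rule der)
        show "onorm ((\<lambda>v. D w \<bullet> v) - (\<lambda>v. D y \<bullet> v)) \<le> \<epsilon>" if w: "w \<in> ball y (min d 1)" for w
        proof -
          have "w \<in> K1" using inK1[OF y, of w] w by (simp add: dist_norm norm_minus_commute)
          then have "dist (D w) (D y) < \<epsilon>" using d(2) yK1 w by (simp add: dist_commute)
          then have "norm (D w - D y) \<le> \<epsilon>" by (simp add: dist_norm)
          moreover have "(\<lambda>v. D w \<bullet> v) - (\<lambda>v. D y \<bullet> v) = (\<lambda>v. (D w - D y) \<bullet> v)"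
            by (simp add: fun_eq_iff inner_diff_left)
          ultimately show ?thesis using onb[of "D w - D y"] by simp
        qed
        show "y \<in> ball y (min d 1)" using d by simp
      qed
      then show "\<bar>\<phi> z - \<phi> y - D y \<bullet> (z - y)\<bar> \<le> \<epsilon> * norm (z - y)" by (simp add: mult.commute)
    qed
  qed
qed

lemma vec_C1_bounds:
  fixes F :: "real^'n \<Rightarrow> real^'k"
  assumes C: "\<And>j. C1 (\<lambda>y. F y $ j) (D j)" and K: "compact K"
  shows "\<exists>L\<ge>0. \<forall>y\<in>K. \<forall>z. norm (z - y) \<le> 1 \<longrightarrow> norm (F z - F y) \<le> L * norm (z - y)"
    and "\<forall>\<epsilon>>0. \<exists>\<delta>>0. \<forall>y\<in>K. \<forall>z. norm (z - y) < \<delta> \<longrightarrow>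
            norm (F z - F y - (\<chi> j. D j y \<bullet> (z - y))) \<le> \<epsilon> * norm (z - y)"
proof -
  have "\<forall>j. \<exists>L\<ge>0. \<forall>y\<in>K. \<forall>z. norm (z - y) \<le> 1 \<longrightarrow> \<bar>F z $ j - F y $ j\<bar> \<le> L * norm (z - y)"
    using C1_bounds(1)[OF C K] by blast
  then obtain L where L: "\<And>j. L j \<ge> 0" "\<And>j. \<forall>y\<in>K. \<forall>z. norm (z - y) \<le> 1 \<longrightarrow> \<bar>F z $ j - F y $ j\<bar> \<le> L j * norm (z - y)"
    by metis
  show "\<exists>L\<ge>0. \<forall>y\<in>K. \<forall>z. norm (z - y) \<le> 1 \<longrightarrow> norm (F z - F y) \<le> L * norm (z - y)"
  proof (intro exI[of _ "\<Sum>j\<in>UNIV. L j"] conjI ballI allI impI)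
    show "0 \<le> (\<Sum>j\<in>UNIV. L j)" using L(1) by (simp add: sum_nonneg)
    fix y z assume y: "y \<in> K" and z: "norm (z - y) \<le> 1"
    have "norm (F z - F y) \<le> (\<Sum>j\<in>UNIV. \<bar>(F z - F y) $ j\<bar>)" by (rule norm_le_l1_cart)
    also have "\<dots> \<le> (\<Sum>j\<in>UNIV. L j * norm (z - y))"
      using L(2) y z by (intro sum_mono) simp
    also have "\<dots> = (\<Sum>j\<in>UNIV. L j) * norm (z - y)" by (simp add: sum_distrib_right)
    finally show "norm (F z - F y) \<le> (\<Sum>j\<in>UNIV. L j) * norm (z - y)" .
  qed
  show "\<forall>\<epsilon>>0. \<exists>\<delta>>0. \<forall>y\<in>K. \<forall>z. norm (z - y) < \<delta> \<longrightarrow>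
            norm (F z - F y - (\<chi> j. D j y \<bullet> (z - y))) \<le> \<epsilon> * norm (z - y)"
  proof (intro allI impI)
    fix \<epsilon> :: real assume e: "\<epsilon> > 0"
    define e' where "e' = \<epsilon> / real CARD('k)"
    have e': "e' > 0" using e by (simp add: e'_def)
    have "\<forall>j. \<exists>\<delta>>0. \<forall>y\<in>K. \<forall>z. norm (z - y) < \<delta> \<longrightarrow>
            \<bar>F z $ j - F y $ j - D j y \<bullet> (z - y)\<bar> \<le> e' * norm (z - y)"
      using C1_bounds(2)[OF C K] e' by blast
    then obtain d where d: "\<And>j. d j > 0" "\<And>j. \<forall>y\<in>K. \<forall>z. norm (z - y) < d j \<longrightarrow>
            \<bar>F z $ j - F y $ j - D j y \<bullet> (z - y)\<bar> \<le> e' * norm (z - y)"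
      by metis
    define \<delta> where "\<delta> = Min (range d)"
    have dpos: "\<delta> > 0" unfolding \<delta>_def using d(1) by (subst Min_gr_iff) auto
    have dle: "\<delta> \<le> d j" for j unfolding \<delta>_def by (rule Min_le) auto
    show "\<exists>\<delta>>0. \<forall>y\<in>K. \<forall>z. norm (z - y) < \<delta> \<longrightarrow>
            norm (F z - F y - (\<chi> j. D j y \<bullet> (z - y))) \<le> \<epsilon> * norm (z - y)"
    proof (intro exI[of _ \<delta>] conjI ballI allI impI dpos)
      fix y z assume y: "y \<in> K" and z: "norm (z - y) < \<delta>"
      have "norm (F z - F y - (\<chi> j. D j y \<bullet> (z - y)))
          \<le> (\<Sum>j\<in>UNIV. \<bar>(F z - F y - (\<chi> j. D j y \<bullet> (z - y))) $ j\<bar>)" by (rule norm_le_l1_cart)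
      also have "\<dots> \<le> (\<Sum>j\<in>(UNIV::'k set). e' * norm (z - y))"
      proof (intro sum_mono)
        fix j :: 'k
        have "norm (z - y) < d j" using z dle[of j] by simp
        then show "\<bar>(F z - F y - (\<chi> j. D j y \<bullet> (z - y))) $ j\<bar> \<le> e' * norm (z - y)"
          using d(2)[of j] y by simp
      qed
      also have "\<dots> = \<epsilon> * norm (z - y)" by (simp add: e'_def)
      finally show "norm (F z - F y - (\<chi> j. D j y \<bullet> (z - y))) \<le> \<epsilon> * norm (z - y)" .
    qed
  qed
qed

lemma C1_psi:
  fixes proj :: "real^'n \<Rightarrow> real^'v"
  assumes lin: "linear proj"
  shows "C1 (psi eta Sig proj s) (grad (psi eta Sig proj s))"
proof -
  have bl: "bounded_linear proj" using lin by (simp add: linear_conv_bounded_linear)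
  define M where "M = matrix_inv Sig"
  define Q where "Q y = -(1/2) * ((s - proj y) \<bullet> (M *v (s - proj y)))" for y
  define L where "L y v = (1/eta) * exp (Q y) * (-(1/2) * ((- proj v) \<bullet> (M *v (s - proj y)) + (s - proj y) \<bullet> (M *v (- proj v))))" for y v
  have eq: "psi eta Sig proj s = (\<lambda>y. (1/eta) * exp (Q y))"
    by (simp add: psi_def[abs_def] Q_def M_def)
  have dw: "((\<lambda>y. s - proj y) has_derivative (\<lambda>v. - proj v)) (at y)" for y
    by (rule has_derivative_eq_rhs[OF has_derivative_diff[OF has_derivative_const bounded_linear.has_derivative[OF bl has_derivative_ident]]]) simp
  have dMw: "((\<lambda>y. M *v (s - proj y)) has_derivative (\<lambda>v. M *v (- proj v))) (at y)" for y
    by (rule bounded_linear.has_derivative[OF matrix_vector_mul_bounded_linear dw])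
  have dQ: "(Q has_derivative (\<lambda>v. -(1/2) * ((- proj v) \<bullet> (M *v (s - proj y)) + (s - proj y) \<bullet> (M *v (- proj v))))) (at y)" for y
    unfolding Q_def[abs_def]
    by (rule has_derivative_eq_rhs[OF has_derivative_mult[OF has_derivative_const has_derivative_inner[OF dw dMw]]])
       (simp add: fun_eq_iff algebra_simps)
  have dpsi: "(psi eta Sig proj s has_derivative L y) (at y)" for y
    unfolding eq L_def[abs_def]
    by (rule has_derivative_eq_rhs, (rule derivative_intros dQ)+) (simp add: fun_eq_iff algebra_simps)
  have cproj: "continuous_on UNIV proj" by (rule linear_continuous_on[OF bl])
  have cQ: "continuous_on UNIV Q"
    unfolding Q_def[abs_def]
    by (intro continuous_intros cproj bounded_linear.continuous_on[OF matrix_vector_mul_bounded_linear])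
  have cL: "continuous_on UNIV (\<lambda>y. L y (axis i 1))" for i
    unfolding L_def
    by (intro continuous_intros cproj cQ bounded_linear.continuous_on[OF matrix_vector_mul_bounded_linear])
  have "C1 (psi eta Sig proj s) (\<lambda>y. \<chi> i. L y (axis i 1))"
    by (rule C1_of_linear_form[OF dpsi cL])
  with C1_grad show ?thesis by metis
qed

lemma jacobian_apply:
  fixes F :: "real^'n \<Rightarrow> real^'m"
  assumes "(F has_derivative F') (at y)"
  shows "jacobian F (at y) *v w = F' w"
proof -
  have "F' = frechet_derivative F (at y)" using assms by (rule frechet_derivative_at)
  moreover have "linear F'" using assms by (rule has_derivative_linear)
  ultimately show ?thesis by (simp add: jacobian_def matrix_works)
qed

lemma C1_vec_deriv:
  fixes G :: "real^'n \<Rightarrow> real^'m"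
  assumes "\<And>j. C1 (\<lambda>y. G y $ j) (D j)"
  shows "(G has_derivative (\<lambda>v. \<chi> j. D j y \<bullet> v)) (at y)"
  using assms unfolding C1_def by (intro has_derivative_vec_lambdaI) simp

lemma closed_loop_jacobian:
  fixes g :: "real^'n \<Rightarrow> real^'n"
    and h :: "real^'n \<Rightarrow> real^'m^'n"
    and f :: "real^'n \<Rightarrow> real^'m \<Rightarrow> real^'n"
    and mu :: "real^'n \<Rightarrow> real^'m"
  assumes f_def: "\<And>y u. f y u = g y + h y *v u"
    and Cg: "\<And>j. C1 (\<lambda>y. g y $ j) (Dg j)"
    and Ch: "\<And>j k. C1 (\<lambda>y. h y $ j $ k) (Dh j k)"
    and Cmu: "\<And>k. C1 (\<lambda>y. mu y $ k) (Dmu k)"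
  shows "(jacobian (\<lambda>y. f y (mu y0)) (at y0) + jacobian (f y0) (at (mu y0)) ** jacobian mu (at y0)) *v w
        = (\<chi> j. (Dg j y0 + (\<Sum>k\<in>UNIV. h y0 $ j $ k *\<^sub>R Dmu k y0 + mu y0 $ k *\<^sub>R Dh j k y0)) \<bullet> w)"
proof -
  let ?c = "mu y0"
  have d1: "((\<lambda>y. f y ?c) has_derivative (\<lambda>v. \<chi> j. Dg j y0 \<bullet> v + (\<Sum>k\<in>UNIV. (Dh j k y0 \<bullet> v) * ?c $ k))) (at y0)"
  proof (rule has_derivative_vec_lambdaI)
    fix j
    have e: "(\<lambda>y. f y ?c $ j) = (\<lambda>y. g y $ j + (\<Sum>k\<in>UNIV. h y $ j $ k * ?c $ k))"
      by (simp add: f_def matrix_vector_mult_def)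
    have "((\<lambda>y. g y $ j + (\<Sum>k\<in>UNIV. h y $ j $ k * ?c $ k)) has_derivative
           (\<lambda>v. Dg j y0 \<bullet> v + (\<Sum>k\<in>UNIV. (Dh j k y0 \<bullet> v) * ?c $ k))) (at y0)"
      using Cg[of j] Ch[of j] unfolding C1_def
      by (intro derivative_intros) auto
    then show "((\<lambda>y. f y ?c $ j) has_derivative
           (\<lambda>v. (\<chi> j. Dg j y0 \<bullet> v + (\<Sum>k\<in>UNIV. (Dh j k y0 \<bullet> v) * ?c $ k)) $ j)) (at y0)"
      by (simp add: e)
  qed
  have d2: "(f y0 has_derivative (\<lambda>u. h y0 *v u)) (at ?c)"
  proof -
    have "((\<lambda>u. g y0 + h y0 *v u) has_derivative (\<lambda>u. 0 + h y0 *v u)) (at ?c)"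
      by (intro has_derivative_add has_derivative_const
          bounded_linear.has_derivative[OF matrix_vector_mul_bounded_linear] has_derivative_ident)
    then show ?thesis by (simp add: f_def[abs_def])
  qed
  have d3: "(mu has_derivative (\<lambda>v. \<chi> k. Dmu k y0 \<bullet> v)) (at y0)"
    by (rule C1_vec_deriv[OF Cmu])
  have "(jacobian (\<lambda>y. f y ?c) (at y0) + jacobian (f y0) (at ?c) ** jacobian mu (at y0)) *v w
      = jacobian (\<lambda>y. f y ?c) (at y0) *v w + jacobian (f y0) (at ?c) *v (jacobian mu (at y0) *v w)"
    by (simp add: matrix_vector_mult_add_rdistrib matrix_vector_mul_assoc)
  also have "\<dots> = (\<chi> j. Dg j y0 \<bullet> w + (\<Sum>k\<in>UNIV. (Dh j k y0 \<bullet> w) * ?c $ k)) + h y0 *v (\<chi> k. Dmu k y0 \<bullet> w)"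
    using jacobian_apply[OF d1] jacobian_apply[OF d2] jacobian_apply[OF d3] by simp
  also have "\<dots> = (\<chi> j. (Dg j y0 + (\<Sum>k\<in>UNIV. h y0 $ j $ k *\<^sub>R Dmu k y0 + mu y0 $ k *\<^sub>R Dh j k y0)) \<bullet> w)"
    by (simp add: vec_eq_iff matrix_vector_mult_def inner_add_left inner_sum_left sum.distrib algebra_simps)
  finally show ?thesis .
qed

lemma gronwall:
  fixes u :: "real \<Rightarrow> real"
  assumes ab: "a \<le> b" and cu: "continuous_on {a..b} u" and L: "L \<ge> 0"
    and hyp: "\<And>t. t \<in> {a..b} \<Longrightarrow> u t \<le> K + L * integral {a..t} u"
    and t: "t \<in> {a..b}"
  shows "u t \<le> K * exp (L * (t - a))"
proof -
  define I where "I s = integral {a..s} u" for s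
  define w where "w s = exp (- L * (s - a)) * (K + L * I s)" for s
  have dI: "(I has_real_derivative u s) (at s within {a..b})" if "s \<in> {a..b}" for s
    unfolding I_def by (rule integral_has_real_derivative[OF cu that])
  have cI: "continuous_on {a..b} I"
    using dI by (meson DERIV_continuous continuous_on_eq_continuous_within)
  have cw: "continuous_on {a..t} w"
    unfolding w_def using t
    by (intro continuous_intros continuous_on_subset[OF cI]) auto
  have "w t \<le> w a"
  proof (rule DERIV_nonpos_imp_decreasing_open[of a t w])
    show "a \<le> t" using t by simp
    show "continuous_on {a..t} w" by (rule cw)
    fix s assume s: "a < s" "s < t"
    then have sab: "s \<in> {a..b}" and sint: "s \<in> interior {a..b}" using t by auto
    have dIs: "(I has_real_derivative u s) (at s)"
      using dI[OF sab] at_within_interior[OF sint] by simp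
    have "(w has_real_derivative exp (- L * (s - a)) * (L * (u s - (K + L * I s)))) (at s)"
      unfolding w_def
      by (rule derivative_eq_intros dIs refl | simp)+ (simp add: algebra_simps)
    moreover have "exp (- L * (s - a)) * (L * (u s - (K + L * I s))) \<le> 0"
      using hyp[OF sab] L unfolding I_def
      by (intro mult_nonneg_nonpos) (auto intro: mult_nonneg_nonpos)
    ultimately show "\<exists>y. (w has_real_derivative y) (at s) \<and> y \<le> 0" by blast
  qed
  moreover have "w a = K" by (simp add: w_def I_def)
  ultimately have "w t \<le> K" by simp
  then have "exp (- L * (t - a)) * (K + L * I t) \<le> K" by (simp only: w_def)
  then have "exp (L * (t - a)) * (exp (- L * (t - a)) * (K + L * I t)) \<le> exp (L * (t - a)) * K"
    by (intro mult_left_mono) auto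
  moreover have "exp (L * (t - a)) * exp (- L * (t - a)) = 1"
    by (simp add: exp_minus)
  moreover have "exp (L * (t - a)) * (exp (- L * (t - a)) * (K + L * I t)) = K + L * I t"
    using calculation(2) by (metis mult.assoc mult_1)
  ultimately have "K + L * I t \<le> K * exp (L * (t - a))"
    by (metis mult.commute)
  then show ?thesis using hyp[OF t] unfolding I_def by simp
qed

lemma restrict_interval_integrable:
  fixes H :: "real \<Rightarrow> 'a::banach" and a b c d :: real
  assumes "continuous_on {a..b} H"
  shows "(\<lambda>r. if r \<in> {c..d} then H r else 0) integrable_on {a..b}"
proof -
  have "{c..d} \<inter> {a..b} = {max c a..min d b}" by auto
  moreover have "H integrable_on {max c a..min d b}"
    by (rule integrable_continuous_interval, rule continuous_on_subset[OF assms]) auto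
  ultimately show ?thesis using integrable_restrict_Int[of "{c..d}" H "{a..b}"] by simp
qed

lemma pw_integrable:
  fixes P Q :: "real \<Rightarrow> 'a::banach" and a b c d :: real
  assumes P: "continuous_on {a..b} P" and Q: "continuous_on {a..b} Q"
  shows "(\<lambda>r. if c \<le> r \<and> r < d then P r else Q r) integrable_on {a..b}"
proof -
  have i: "(\<lambda>r. Q r + (if r \<in> {c..d} then P r - Q r else 0)) integrable_on {a..b}"
    by (intro integrable_add integrable_continuous_interval Q restrict_interval_integrable continuous_intros P)
  show ?thesis
    by (rule integrable_spike_finite[where S="{d}", OF _ _ i]) auto
qed

lemma ind_integrable:
  fixes a b c d k :: real
  shows "(\<lambda>r. if c \<le> r \<and> r < d then (k::real) else 0) integrable_on {a..b}"
  using pw_integrable[where P="\<lambda>_. k" and Q="\<lambda>_. 0" and a=a and b=b and c=c and d=d] by simp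

lemma ind_integral:
  assumes "c \<le> d"
  shows "integral {a..b} (\<lambda>r. if c \<le> r \<and> r < d then (1::real) else 0) \<le> d - c"
    and "a \<le> c \<Longrightarrow> d \<le> b \<Longrightarrow> integral {a..b} (\<lambda>r. if c \<le> r \<and> r < d then (1::real) else 0) = d - c"
proof -
  have "integral {a..b} (\<lambda>r. if c \<le> r \<and> r < d then (1::real) else 0)
      = integral {a..b} (\<lambda>r. if r \<in> {c..d} then (1::real) else 0)"
    by (rule integral_spike[where S="{d}"]) auto
  also have "\<dots> = integral ({c..d} \<inter> {a..b}) (\<lambda>r. 1::real)"
    by (rule integral_restrict_Int)
  also have "{c..d} \<inter> {a..b} = {max c a..min d b}" by auto
  finally have eq: "integral {a..b} (\<lambda>r. if c \<le> r \<and> r < d then (1::real) else 0) = integral {max c a..min d b} (\<lambda>r. 1::real)"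
    by simp
  show "integral {a..b} (\<lambda>r. if c \<le> r \<and> r < d then (1::real) else 0) \<le> d - c"
    unfolding eq using assms by (cases "max c a \<le> min d b") auto
  show "a \<le> c \<Longrightarrow> d \<le> b \<Longrightarrow> integral {a..b} (\<lambda>r. if c \<le> r \<and> r < d then (1::real) else 0) = d - c"
    unfolding eq using assms by auto
qed

locale needle =
  fixes Fc :: "real^'n \<Rightarrow> real^'n" and DF :: "'n \<Rightarrow> real^'n \<Rightarrow> real^'n"
    and P :: "real \<Rightarrow> real^'n \<Rightarrow> real^'n"
    and x :: "real \<Rightarrow> real^'n" and xl :: "real \<Rightarrow> real \<Rightarrow> real^'n"
    and x0 :: "real^'n" and t0 tf tau d0 :: real
  assumes CF: "\<And>j. C1 (\<lambda>y. Fc y $ j) (DF j)"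
    and Pc: "continuous_on ({t0..tf} \<times> UNIV) (\<lambda>z. P (fst z) (snd z))"
    and t0tau: "t0 < tau" and tautf: "tau < tf"
    and xc: "continuous_on {t0..tf} x"
    and xint: "\<And>t. t \<in> {t0..tf} \<Longrightarrow> x t = x0 + integral {t0..t} (\<lambda>r. Fc (x r))"
    and d0: "d0 > 0"
    and xlc: "\<And>lam. 0 \<le> lam \<Longrightarrow> lam < d0 \<Longrightarrow> continuous_on {t0..tf} (xl lam)"
    and xlint: "\<And>lam t. 0 \<le> lam \<Longrightarrow> lam < d0 \<Longrightarrow> t \<in> {t0..tf} \<Longrightarrow>
        xl lam t = x0 + integral {t0..t} (\<lambda>r. if tau \<le> r \<and> r < tau + lam then P r (xl lam r) else Fc (xl lam r))"
begin

definition "G lam r = (if tau \<le> r \<and> r < tau + lam then P r (xl lam r) else Fc (xl lam r))"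
definition "DFv y w = (\<chi> j. DF j y \<bullet> w)"
definition "K = x ` {t0..tf}"
definition "K1 = {a + b |a b. a \<in> K \<and> b \<in> cball (0::real^'n) 1}"

lemma Fc_cont: "continuous_on UNIV Fc"
proof -
  have "continuous_on UNIV (\<lambda>y. \<chi> j. Fc y $ j)"
    by (intro continuous_on_vec_lambda C1_cont[OF CF])
  then show ?thesis by simp
qed

lemma K_compact: "compact K"
  unfolding K_def by (intro compact_continuous_image xc compact_Icc)

lemma K1_compact: "compact K1"
  unfolding K1_def by (intro compact_sums K_compact compact_cball)

lemma inK1: assumes "y \<in> K" "norm (z - y) \<le> 1" shows "z \<in> K1"
proof -
  have "z = y + (z - y)" by simp
  moreover have "z - y \<in> cball 0 1" using assms by simp
  ultimately show ?thesis unfolding K1_def using assms(1) by blast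
qed

lemma xK: "t \<in> {t0..tf} \<Longrightarrow> x t \<in> K" unfolding K_def by auto

lemma Fx_cont: "continuous_on {t0..tf} (\<lambda>r. Fc (x r))"
  by (rule continuous_on_compose2[OF Fc_cont xc]) auto

lemma P_comp_cont:
  assumes "continuous_on {t0..tf} y"
  shows "continuous_on {t0..tf} (\<lambda>r. P r (y r))"
proof -
  have "continuous_on {t0..tf} (\<lambda>r. (\<lambda>z. P (fst z) (snd z)) (r, y r))"
    by (rule continuous_on_compose2[OF Pc]) (auto intro!: continuous_intros assms)
  then show ?thesis by simp
qed

lemma G_int:
  assumes "0 \<le> lam" "lam < d0" "t \<le> tf"
  shows "G lam integrable_on {t0..t}"
proof (cases "t0 \<le> t")
  case True
  have "G lam integrable_on {t0..tf}"
    unfolding G_def[abs_def]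
    by (intro pw_integrable P_comp_cont xlc assms continuous_on_compose2[OF Fc_cont xlc]) auto
  then show ?thesis by (rule integrable_subinterval_real) (use assms True in auto)
next
  case False then show ?thesis by (simp add: integrable_on_empty) 
qed

lemma xl_init: "0 \<le> lam \<Longrightarrow> lam < d0 \<Longrightarrow> xl lam t0 = x0"
  using xlint[of lam t0] t0tau tautf by simp

lemma x_init: "x t0 = x0"
  using xint[of t0] t0tau tautf by simp

lemma e_int:
  assumes "0 \<le> lam" "lam < d0" "t \<in> {t0..tf}"
  shows "xl lam t - x t = integral {t0..t} (\<lambda>r. G lam r - Fc (x r))"
proof -
  have "(\<lambda>r. Fc (x r)) integrable_on {t0..t}"
    by (rule integrable_continuous_interval, rule continuous_on_subset[OF Fx_cont]) (use assms in auto)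
  moreover have "xl lam t = x0 + integral {t0..t} (G lam)"
    using xlint[OF assms] by (simp add: G_def[abs_def])
  ultimately show ?thesis
    using xint[OF assms(3)] G_int[OF assms(1,2)] assms(3)
    by (simp add: integral_diff)
qed

lemma Lip_F:
  obtains L where "L \<ge> 0" "\<And>y z. y \<in> K \<Longrightarrow> norm (z - y) \<le> 1 \<Longrightarrow> norm (Fc z - Fc y) \<le> L * norm (z - y)"
  using vec_C1_bounds(1)[OF CF K_compact] by blast

lemma M_bound:
  obtains M where "M \<ge> 0" "\<And>r y. r \<in> {t0..tf} \<Longrightarrow> y \<in> K1 \<Longrightarrow> norm (P r y - Fc (x r)) \<le> M"
proof -
  let ?S = "{t0..tf} \<times> K1"
  have c1: "continuous_on ?S (\<lambda>z. P (fst z) (snd z))"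
    by (rule continuous_on_subset[OF Pc]) auto
  have c2: "continuous_on ?S (\<lambda>z. Fc (x (fst z)))"
    by (rule continuous_on_compose2[OF Fx_cont continuous_on_fst]) auto
  have "compact ((\<lambda>z. P (fst z) (snd z) - Fc (x (fst z))) ` ?S)"
    by (intro compact_continuous_image continuous_intros c1 c2 compact_Times compact_Icc K1_compact)
  then obtain B where B: "\<forall>v\<in>(\<lambda>z. P (fst z) (snd z) - Fc (x (fst z))) ` ?S. norm v \<le> B"
    by (auto dest!: compact_imp_bounded simp: bounded_iff)
  show ?thesis
  proof (rule that[of "max B 0"])
    fix r y assume "r \<in> {t0..tf}" "y \<in> K1"
    then have "norm (P r y - Fc (x r)) \<le> B" using B by force
    then show "norm (P r y - Fc (x r)) \<le> max B 0" by simp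
  qed simp
qed

lemma err_bound:
  obtains C d where "C \<ge> 0" "d > 0" "d \<le> d0"
    "\<And>lam t. 0 \<le> lam \<Longrightarrow> lam < d \<Longrightarrow> t \<in> {t0..tf} \<Longrightarrow>
        norm (xl lam t - x t) \<le> C * lam \<and> norm (xl lam t - x t) < 1"
proof -
  obtain L where L0: "L \<ge> 0" and Lip: "\<And>y z. y \<in> K \<Longrightarrow> norm (z - y) \<le> 1 \<Longrightarrow> norm (Fc z - Fc y) \<le> L * norm (z - y)"
    using Lip_F by blast
  obtain M where M0: "M \<ge> 0" and Mb: "\<And>r y. r \<in> {t0..tf} \<Longrightarrow> y \<in> K1 \<Longrightarrow> norm (P r y - Fc (x r)) \<le> M"
    using M_bound by blast
  define C where "C = M * exp (L * (tf - t0))"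
  have C0: "C \<ge> 0" using M0 by (simp add: C_def)
  define d where "d = min d0 (1 / (C + 1))"
  have dpos: "d > 0" using d0 C0 by (simp add: d_def)
  have dle: "d \<le> d0" by (simp add: d_def)
  show ?thesis
  proof (rule that[OF C0 dpos dle])
    fix lam t assume lam0: "0 \<le> lam" and lamd: "lam < d" and t: "t \<in> {t0..tf}"
    have lamd0: "lam < d0" using lamd dle by simp
    have Clam: "C * lam < 1"
    proof -
      have "lam < 1 / (C + 1)" using lamd by (simp add: d_def)
      then have "(C + 1) * lam < 1" using C0 by (simp add: field_simps)
      then show ?thesis using lam0 by (simp add: algebra_simps)
    qed
    define u where "u s = norm (xl lam s - x s)" for s
    have cu: "continuous_on {t0..tf} u"
      unfolding u_def by (intro continuous_intros xlc lam0 lamd0 xc)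
    have u0: "u t0 = 0" by (simp add: u_def xl_init[OF lam0 lamd0] x_init)
    have ind_int: "(\<lambda>r. if tau \<le> r \<and> r < tau + lam then (1::real) else 0) integrable_on {t0..s}" for s
      by (rule ind_integrable)
    have key: "u s \<le> M * lam + L * integral {t0..s} u"
      if s: "s \<in> {t0..tf}" and small: "\<forall>r\<in>{t0..s}. u r < 1" for s
    proof -
      have uint: "u integrable_on {t0..s}"
        by (rule integrable_continuous_interval, rule continuous_on_subset[OF cu]) (use s in auto)
      have i1: "(\<lambda>r. L * u r) integrable_on {t0..s}" using integrable_cmul[OF uint, of L] by simp
      have i2: "(\<lambda>r. M * (if tau \<le> r \<and> r < tau + lam then (1::real) else 0)) integrable_on {t0..s}"
        using integrable_cmul[OF ind_int, of M] by simp
      have Gi: "(\<lambda>r. G lam r - Fc (x r)) integrable_on {t0..s}"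
        by (intro integrable_diff G_int lam0 lamd0 integrable_continuous_interval continuous_on_subset[OF Fx_cont])
           (use s in auto)
      have "u s = norm (integral {t0..s} (\<lambda>r. G lam r - Fc (x r)))"
        unfolding u_def using e_int[OF lam0 lamd0 s] by simp
      also have "\<dots> \<le> integral {t0..s} (\<lambda>r. L * u r + M * (if tau \<le> r \<and> r < tau + lam then 1 else 0))"
      proof (rule integral_norm_bound_integral[OF Gi])
        show "(\<lambda>r. L * u r + M * (if tau \<le> r \<and> r < tau + lam then 1 else 0)) integrable_on {t0..s}"
          by (intro integrable_add i1 i2)
        fix r assume r: "r \<in> {t0..s}"
        then have rI: "r \<in> {t0..tf}" using s by auto
        have ur: "u r < 1" using small r by blast
        have xlK1: "xl lam r \<in> K1"
          using inK1[OF xK[OF rI], of "xl lam r"] ur by (simp add: u_def)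
        have lipr: "norm (Fc (xl lam r) - Fc (x r)) \<le> L * u r"
          using Lip[OF xK[OF rI], of "xl lam r"] ur by (simp add: u_def)
        have "0 \<le> L * u r" using L0 by (simp add: u_def)
        then show "norm (G lam r - Fc (x r)) \<le> L * u r + M * (if tau \<le> r \<and> r < tau + lam then 1 else 0)"
          using Mb[OF rI xlK1] lipr by (auto simp: G_def)
      qed
      also have "\<dots> = L * integral {t0..s} u + M * integral {t0..s} (\<lambda>r. if tau \<le> r \<and> r < tau + lam then (1::real) else 0)"
        by (simp add: integral_add[OF i1 i2])
      also have "\<dots> \<le> L * integral {t0..s} u + M * lam"
        using ind_integral(1)[of tau "tau + lam" t0 s] lam0 M0 by (auto intro: mult_left_mono)
      finally show ?thesis by simp
    qed
    have gron: "u s \<le> C * lam" if s: "s \<in> {t0..tf}" and small: "\<forall>r\<in>{t0..s}. u r < 1" for s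
    proof -
      have "u s \<le> (M * lam) * exp (L * (s - t0))"
      proof (rule gronwall[of t0 s u L "M * lam"])
        show "t0 \<le> s" using s by simp
        show "continuous_on {t0..s} u" by (rule continuous_on_subset[OF cu]) (use s in auto)
        show "L \<ge> 0" by (rule L0)
        show "s \<in> {t0..s}" using s by simp
        fix r assume r: "r \<in> {t0..s}"
        show "u r \<le> M * lam + L * integral {t0..r} u"
          by (rule key) (use r s small in auto)
      qed
      also have "\<dots> \<le> (M * lam) * exp (L * (tf - t0))"
        using s L0 M0 lam0 by (intro mult_left_mono) (auto intro: mult_left_mono)
      finally show ?thesis by (simp add: C_def algebra_simps)
    qed
    have all_small: "\<forall>r\<in>{t0..tf}. u r < 1"
    proof (rule ccontr)
      assume "\<not> (\<forall>r\<in>{t0..tf}. u r < 1)"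
      define Z where "Z = {r \<in> {t0..tf}. (\<lambda>_. 1) r \<le> u r}"
      have Zne: "Z \<noteq> {}" using \<open>\<not> _\<close> by (auto simp: Z_def not_less)
      have Zcl: "closed Z" unfolding Z_def
        by (rule continuous_on_closed_Collect_le[OF continuous_on_const cu closed_atLeastAtMost])
      have Zbd: "bdd_below Z" unfolding Z_def by (auto intro: bdd_belowI[of _ t0])
      define t1 where "t1 = Inf Z"
      have t1Z: "t1 \<in> Z" unfolding t1_def by (rule closed_contains_Inf[OF Zne Zbd Zcl])
      have t1I: "t1 \<in> {t0..tf}" and ut1: "1 \<le> u t1" using t1Z by (auto simp: Z_def)
      have t0t1: "t0 < t1" using t1I ut1 u0 by (cases "t0 = t1") auto
      have below: "u r < 1" if "r \<in> {t0..<t1}" for r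
      proof (rule ccontr)
        assume "\<not> u r < 1"
        then have "r \<in> Z" using that t1I by (auto simp: Z_def)
        then have "t1 \<le> r" unfolding t1_def by (rule cInf_lower[OF _ Zbd])
        then show False using that by simp
      qed
      have "{t0..<t1} \<subseteq> {r \<in> {t0..t1}. u r \<le> (\<lambda>_. C * lam) r}"
      proof
        fix r assume r: "r \<in> {t0..<t1}"
        have "u r \<le> C * lam"
          by (rule gron) (use r t1I below in auto)
        then show "r \<in> {r \<in> {t0..t1}. u r \<le> (\<lambda>_. C * lam) r}" using r by auto
      qed
      moreover have "closed {r \<in> {t0..t1}. u r \<le> (\<lambda>_. C * lam) r}"
        by (rule continuous_on_closed_Collect_le[OF continuous_on_subset[OF cu] continuous_on_const closed_atLeastAtMost])
           (use t1I in auto)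
      ultimately have "closure {t0..<t1} \<subseteq> {r \<in> {t0..t1}. u r \<le> (\<lambda>_. C * lam) r}"
        by (rule closure_minimal)
      moreover have "t1 \<in> closure {t0..<t1}" using t0t1 by simp
      ultimately have "u t1 \<le> C * lam" by blast
      then show False using ut1 Clam by simp
    qed
    have "u t \<le> C * lam" by (rule gron[OF t]) (use all_small t in auto)
    then show "norm (xl lam t - x t) \<le> C * lam \<and> norm (xl lam t - x t) < 1"
      using all_small t by (auto simp: u_def)
  qed
qed

end

context needle begin

lemma G_cont_at:
  assumes lam: "0 \<le> lam" "lam < d0" and t: "t \<in> {t0..tf}" "t \<noteq> tau" "t \<noteq> tau + lam"
  shows "continuous (at t within {t0..tf}) (G lam)"
proof -
  have cF: "continuous (at t within {t0..tf}) (\<lambda>r. Fc (xl lam r))"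
    using continuous_on_compose2[OF Fc_cont xlc[OF lam]] t(1)
    by (simp add: continuous_on_eq_continuous_within)
  have cP: "continuous (at t within {t0..tf}) (\<lambda>r. P r (xl lam r))"
    using P_comp_cont[OF xlc[OF lam]] t(1)
    by (simp add: continuous_on_eq_continuous_within)
  consider "t < tau" | "tau < t \<and> t < tau + lam" | "tau + lam < t"
    using t lam by linarith
  then show ?thesis
  proof cases
    case 1
    show ?thesis
      by (rule continuous_transform_within[OF cF, of "tau - t"]) (use 1 t in \<open>auto simp: G_def dist_real_def\<close>)
  next
    case 2
    show ?thesis
      by (rule continuous_transform_within[OF cP, of "min (t - tau) (tau + lam - t)"])
         (use 2 t in \<open>auto simp: G_def dist_real_def\<close>)
  next
    case 3
    show ?thesis
      by (rule continuous_transform_within[OF cF, of "t - (tau + lam)"]) (use 3 t in \<open>auto simp: G_def dist_real_def\<close>)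
  qed
qed

lemma interior_sub:
  assumes "finite S" "t \<in> {t0<..<tf} - S"
  shows "at t within ({t0..tf} - S) = at t"
proof (rule at_within_interior)
  have "open ({t0<..<tf} - S)" using assms(1) by (intro open_Diff finite_imp_closed) auto
  moreover have "{t0<..<tf} - S \<subseteq> {t0..tf} - S" by auto
  ultimately show "t \<in> interior ({t0..tf} - S)" using assms(2) interior_maximal by blast
qed

lemma xl_deriv:
  assumes lam: "0 \<le> lam" "lam < d0" and t: "t \<in> {t0<..<tf} - {tau, tau + lam}"
  shows "(xl lam has_vector_derivative G lam t) (at t)"
proof -
  let ?S = "{tau, tau + lam}"
  have "((\<lambda>u. integral {t0..u} (G lam)) has_vector_derivative G lam t) (at t within ({t0..tf} - ?S))"
  proof (rule integral_has_vector_derivative_continuous_at)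
    show "G lam integrable_on {t0..tf}" by (rule G_int[OF lam]) simp
    show "t \<in> {t0..tf} - ?S" using t by auto
    show "finite ?S" by simp
    show "continuous (at t within ({t0..tf} - ?S)) (G lam)"
      by (rule continuous_within_subset[OF G_cont_at[OF lam]]) (use t in auto)
  qed
  then have d: "((\<lambda>u. integral {t0..u} (G lam)) has_vector_derivative G lam t) (at t)"
    using interior_sub[of ?S t] t by simp
  have "((\<lambda>u. x0 + integral {t0..u} (G lam)) has_vector_derivative G lam t) (at t)"
    using has_vector_derivative_add[OF has_vector_derivative_const d] by simp
  show ?thesis
  proof (rule has_vector_derivative_transform_within_open[OF _ open_greaterThanLessThan])
    show "((\<lambda>u. x0 + integral {t0..u} (G lam)) has_vector_derivative G lam t) (at t)"
      using has_vector_derivative_add[OF has_vector_derivative_const d] by simp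
    show "t \<in> {t0<..<tf}" using t by simp
    fix u assume "u \<in> {t0<..<tf}"
    then show "x0 + integral {t0..u} (G lam) = xl lam u"
      using xlint[OF lam, of u] by (simp add: G_def[abs_def])
  qed
qed

lemma x_deriv:
  assumes t: "t \<in> {t0<..<tf}"
  shows "(x has_vector_derivative Fc (x t)) (at t)"
proof -
  have "((\<lambda>u. integral {t0..u} (\<lambda>r. Fc (x r))) has_vector_derivative Fc (x t)) (at t within {t0..tf})"
    by (rule integral_has_vector_derivative[OF Fx_cont]) (use t in auto)
  then have d: "((\<lambda>u. integral {t0..u} (\<lambda>r. Fc (x r))) has_vector_derivative Fc (x t)) (at t)"
    using interior_sub[of "{}" t] t by simp
  show ?thesis
  proof (rule has_vector_derivative_transform_within_open[OF _ open_greaterThanLessThan])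
    show "((\<lambda>u. x0 + integral {t0..u} (\<lambda>r. Fc (x r))) has_vector_derivative Fc (x t)) (at t)"
      using has_vector_derivative_add[OF has_vector_derivative_const d] by simp
    show "t \<in> {t0<..<tf}" using t by simp
    fix u assume "u \<in> {t0<..<tf}"
    then show "x0 + integral {t0..u} (\<lambda>r. Fc (x r)) = x u"
      using xint[of u] by simp
  qed
qed

end

lemma has_vector_derivative_inner_at:
  fixes f g :: "real \<Rightarrow> 'a::real_inner"
  assumes "(f has_vector_derivative f') (at t)" "(g has_vector_derivative g') (at t)"
  shows "((\<lambda>s. f s \<bullet> g s) has_vector_derivative (f t \<bullet> g' + f' \<bullet> g t)) (at t)"
  using assms unfolding has_vector_derivative_def
  by (rule has_derivative_eq_rhs[OF has_derivative_inner]) (simp add: fun_eq_iff algebra_simps)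

locale needle_adj = needle Fc DF P x xl x0 t0 tf tau d0
  for Fc :: "real^'n \<Rightarrow> real^'n" and DF P x xl x0 t0 tf tau d0 +
  fixes rho b rd :: "real \<Rightarrow> real^'n"
  assumes rho_d: "\<And>t. t \<in> {t0..tf} \<Longrightarrow> (rho has_vector_derivative rd t) (at t within {t0..tf})"
    and rd_eq: "\<And>t w. t \<in> {t0..tf} \<Longrightarrow> rd t \<bullet> w = b t \<bullet> w - rho t \<bullet> (\<chi> j. DF j (x t) \<bullet> w)"
    and rho_f: "rho tf = 0"
    and bc: "continuous_on {t0..tf} b"
begin

lemma rho_cont: "continuous_on {t0..tf} rho"
  using rho_d by (meson continuous_on_eq_continuous_within has_vector_derivative_continuous)

lemma KI:
  assumes lam: "0 \<le> lam" "lam < d0"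
  shows "((\<lambda>t. b t \<bullet> (xl lam t - x t) + rho t \<bullet> (Fc (xl lam t) - Fc (x t) - DFv (x t) (xl lam t - x t))
           + (if tau \<le> t \<and> t < tau + lam then rho t \<bullet> (P t (xl lam t) - Fc (xl lam t)) else 0))
         has_integral 0) {t0..tf}"
proof -
  let ?e = "\<lambda>t. xl lam t - x t"
  have ftc: "((\<lambda>t. rho t \<bullet> (G lam t - Fc (x t)) + rd t \<bullet> ?e t) has_integral (rho tf \<bullet> ?e tf - rho t0 \<bullet> ?e t0)) {t0..tf}"
  proof (rule fundamental_theorem_of_calculus_interior_strong[where S="{tau, tau + lam}"])
    show "finite {tau, tau + lam}" by simp
    show "t0 \<le> tf" using t0tau tautf by simp
    show "continuous_on {t0..tf} (\<lambda>t. rho t \<bullet> ?e t)"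
      by (intro continuous_intros rho_cont xlc lam xc)
    fix t assume t: "t \<in> {t0<..<tf} - {tau, tau + lam}"
    have dr: "(rho has_vector_derivative rd t) (at t)"
      using rho_d[of t] interior_sub[of "{}" t] t by auto
    have de: "(?e has_vector_derivative (G lam t - Fc (x t))) (at t)"
      by (rule has_vector_derivative_diff[OF xl_deriv[OF lam t] x_deriv]) (use t in auto)
    show "((\<lambda>t. rho t \<bullet> ?e t) has_vector_derivative (rho t \<bullet> (G lam t - Fc (x t)) + rd t \<bullet> ?e t)) (at t)"
      by (rule has_vector_derivative_inner_at[OF dr de])
  qed
  have val: "rho tf \<bullet> ?e tf - rho t0 \<bullet> ?e t0 = 0"
    using rho_f xl_init[OF lam] x_init by simp
  show ?thesis
  proof (rule has_integral_spike_finite[where S="{}", OF _ _ ftc[unfolded val]])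
    fix t assume t: "t \<in> {t0..tf} - {}"
    have "rd t \<bullet> ?e t = b t \<bullet> ?e t - rho t \<bullet> DFv (x t) (?e t)"
      using rd_eq[of t "?e t"] t by (simp add: DFv_def)
    then show "b t \<bullet> (xl lam t - x t) + rho t \<bullet> (Fc (xl lam t) - Fc (x t) - DFv (x t) (xl lam t - x t))
           + (if tau \<le> t \<and> t < tau + lam then rho t \<bullet> (P t (xl lam t) - Fc (xl lam t)) else 0)
         = rho t \<bullet> (G lam t - Fc (x t)) + rd t \<bullet> ?e t"
      by (simp add: G_def inner_diff_right algebra_simps)
  qed simp
qed

end

context needle_adj begin

lemma DFv_cont:
  assumes "continuous_on {t0..tf} e"
  shows "continuous_on {t0..tf} (\<lambda>t. DFv (x t) (e t))"
proof -
  have cD: "continuous_on UNIV (DF j)" for j using CF[of j] by (simp add: C1_def)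
  show ?thesis unfolding DFv_def
    by (intro continuous_on_vec_lambda continuous_intros assms continuous_on_compose2[OF cD xc]) auto
qed

lemma main_est:
  assumes e: "\<epsilon> > 0"
  shows "\<exists>\<delta>>0. \<forall>lam. 0 < lam \<and> lam < \<delta> \<longrightarrow>
    \<bar>integral {t0..tf} (\<lambda>t. b t \<bullet> (xl lam t - x t)) + lam * (rho tau \<bullet> (P tau (x tau) - Fc (x tau)))\<bar> \<le> \<epsilon> * lam"
proof -
  obtain C dE where C0: "C \<ge> 0" and dE: "dE > 0" "dE \<le> d0"
    and eb: "\<And>lam t. 0 \<le> lam \<Longrightarrow> lam < dE \<Longrightarrow> t \<in> {t0..tf} \<Longrightarrow>
        norm (xl lam t - x t) \<le> C * lam \<and> norm (xl lam t - x t) < 1"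
    using err_bound by blast
  obtain R where R: "\<forall>t\<in>{t0..tf}. norm (rho t) \<le> R"
    using compact_imp_bounded[OF compact_continuous_image[OF rho_cont compact_Icc]] by (auto simp: bounded_iff)
  have R0: "R \<ge> 0" using R t0tau tautf by (meson atLeastAtMost_iff less_imp_le norm_ge_zero order_trans)
  define T where "T = tf - t0"
  have T0: "T > 0" using t0tau tautf by (simp add: T_def)
  define e1 where "e1 = \<epsilon> / (2 * (R * C * T + 1))"
  have rct: "R * C * T \<ge> 0" using R0 C0 T0 by simp
  have e1: "e1 > 0" unfolding e1_def using e rct by (intro divide_pos_pos) auto
  obtain d1 where d1: "d1 > 0" and exp1: "\<forall>y\<in>K. \<forall>z. norm (z - y) < d1 \<longrightarrow>
      norm (Fc z - Fc y - (\<chi> j. DF j y \<bullet> (z - y))) \<le> e1 * norm (z - y)"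
    using vec_C1_bounds(2)[OF CF K_compact] e1 by blast
  define psi1 where "psi1 z = rho (fst z) \<bullet> (P (fst z) (snd z) - Fc (snd z))" for z
  have cpsi: "continuous_on ({t0..tf} \<times> K1) psi1"
  proof -
    have "continuous_on ({t0..tf} \<times> K1) (\<lambda>z. rho (fst z))"
      by (rule continuous_on_compose2[OF rho_cont continuous_on_fst]) auto
    moreover have "continuous_on ({t0..tf} \<times> K1) (\<lambda>z. P (fst z) (snd z))"
      by (rule continuous_on_subset[OF Pc]) auto
    moreover have "continuous_on ({t0..tf} \<times> K1) (\<lambda>z. Fc (snd z))"
      by (rule continuous_on_compose2[OF Fc_cont continuous_on_snd]) auto
    ultimately show ?thesis unfolding psi1_def by (intro continuous_intros)
  qed
  have tauI: "tau \<in> {t0..tf}" using t0tau tautf by simp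
  have xtauK1: "x tau \<in> K1" using inK1[OF xK[OF tauI], of "x tau"] by simp
  obtain eta where eta: "eta > 0" and ceta: "\<forall>z\<in>{t0..tf} \<times> K1. dist z (tau, x tau) < eta \<longrightarrow>
      dist (psi1 z) (psi1 (tau, x tau)) < \<epsilon> / 2"
    using cpsi xtauK1 tauI e unfolding continuous_on_eq_continuous_within continuous_within_eps_delta
    by (metis (no_types, lifting) SigmaI half_gt_zero)
  obtain eta2 where eta2: "eta2 > 0" and ceta2: "\<forall>t\<in>{t0..tf}. dist t tau < eta2 \<longrightarrow> dist (x t) (x tau) < eta / 2"
    using xc tauI eta unfolding continuous_on_eq_continuous_within continuous_within_eps_delta
    by (metis half_gt_zero)
  define \<delta> where "\<delta> = min (min dE (tf - tau)) (min (d1 / (C + 1)) (min (eta / (2 * (C + 1))) eta2))"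
  have dpos: "\<delta> > 0" using dE d1 eta eta2 C0 tautf by (simp add: \<delta>_def)
  show ?thesis
  proof (intro exI[of _ \<delta>] conjI allI impI dpos)
    fix lam assume lam: "0 < lam \<and> lam < \<delta>"
    have lam0: "0 \<le> lam" and lamdE: "lam < dE" and lamd0: "lam < d0" and lamtf: "tau + lam < tf"
      using lam dE by (auto simp: \<delta>_def)
    have lamd1: "(C + 1) * lam < d1" and lameta: "2 * (C + 1) * lam < eta" and lameta2: "lam < eta2"
      using lam C0 by (auto simp: \<delta>_def field_simps)
    let ?e = "\<lambda>t. xl lam t - x t"
    let ?RF = "\<lambda>t. Fc (xl lam t) - Fc (x t) - DFv (x t) (?e t)"
    let ?W = "\<lambda>t. P t (xl lam t) - Fc (xl lam t)"
    let ?ind = "\<lambda>t. tau \<le> t \<and> t < tau + lam"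
    let ?w0 = "rho tau \<bullet> (P tau (x tau) - Fc (x tau))"
    define f1 where "f1 t = b t \<bullet> ?e t" for t
    define f2 where "f2 t = rho t \<bullet> ?RF t" for t
    define f3 where "f3 t = (if ?ind t then rho t \<bullet> ?W t else 0)" for t
    have ce: "continuous_on {t0..tf} ?e" by (intro continuous_intros xlc lam0 lamd0 xc)
    have cFxl: "continuous_on {t0..tf} (\<lambda>t. Fc (xl lam t))"
      by (rule continuous_on_compose2[OF Fc_cont xlc[OF lam0 lamd0]]) auto
    have i1: "f1 integrable_on {t0..tf}"
      unfolding f1_def by (intro integrable_continuous_interval continuous_intros bc ce)
    have i2: "f2 integrable_on {t0..tf}"
      unfolding f2_def by (intro integrable_continuous_interval continuous_intros rho_cont cFxl Fx_cont DFv_cont ce)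
    have KI': "((\<lambda>t. f1 t + f2 t + f3 t) has_integral 0) {t0..tf}"
      using KI[OF lam0 lamd0] by (simp add: f1_def f2_def f3_def)
    have i3: "f3 integrable_on {t0..tf}"
    proof -
      have "(\<lambda>t. (f1 t + f2 t + f3 t) - f1 t - f2 t) integrable_on {t0..tf}"
        by (intro integrable_diff i1 i2) (use KI' in blast)
      then show ?thesis by simp
    qed
    have sum0: "integral {t0..tf} f1 = - integral {t0..tf} f2 - integral {t0..tf} f3"
    proof -
      have "integral {t0..tf} (\<lambda>t. f1 t + f2 t + f3 t) = 0" using KI' by (rule integral_unique)
      then have "integral {t0..tf} f1 + integral {t0..tf} f2 + integral {t0..tf} f3 = 0"
        by (simp add: integral_add i1 i2 i3 integrable_add)
      then show ?thesis by simp
    qed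
    have b2: "\<bar>integral {t0..tf} f2\<bar> \<le> \<epsilon> / 2 * lam"
    proof -
      have pt: "norm (f2 t) \<le> R * (e1 * (C * lam))" if t: "t \<in> {t0..tf}" for t
      proof -
        have et: "norm (?e t) \<le> C * lam" using eb[OF lam0 lamdE t] by simp
        have "C * lam < d1" using lamd1 lam by (simp add: algebra_simps)
        then have "norm (?RF t) \<le> e1 * norm (?e t)"
          using exp1 xK[OF t] et by (simp add: DFv_def)
        also have "\<dots> \<le> e1 * (C * lam)" using et e1 by (simp add: mult_left_mono)
        finally have "norm (?RF t) \<le> e1 * (C * lam)" .
        then have "\<bar>rho t \<bullet> ?RF t\<bar> \<le> R * (e1 * (C * lam))"
          using Cauchy_Schwarz_ineq2[of "rho t" "?RF t"] R t R0
          by (meson mult_mono norm_ge_zero order_trans)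
        then show ?thesis by (simp add: f2_def)
      qed
      have "norm (integral {t0..tf} f2) \<le> integral {t0..tf} (\<lambda>t. R * (e1 * (C * lam)))"
        by (rule integral_norm_bound_integral[OF i2 integrable_const_ivl pt])
      also have "\<dots> = T * (R * (e1 * (C * lam)))" using T0 by (simp add: T_def)
      also have "\<dots> = (R * C * T) * e1 * lam" by (simp add: algebra_simps)
      also have "\<dots> \<le> \<epsilon> / 2 * lam"
      proof -
        have "(R * C * T) * e1 = \<epsilon> / 2 * ((R * C * T) / (R * C * T + 1))"
          by (simp add: e1_def field_simps)
        also have "\<dots> \<le> \<epsilon> / 2 * 1"
          using rct e by (intro mult_left_mono) auto
        finally have "(R * C * T) * e1 \<le> \<epsilon> / 2" by simp
        then show ?thesis using lam0 by (rule mult_right_mono)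
      qed
      finally show ?thesis by simp
    qed
    define f4 where "f4 t = (if ?ind t then ?w0 else 0)" for t
    have i4: "f4 integrable_on {t0..tf}" unfolding f4_def by (rule ind_integrable)
    have int4: "integral {t0..tf} f4 = lam * ?w0"
    proof -
      have "integral {t0..tf} f4 = integral {t0..tf} (\<lambda>t. ?w0 * (if ?ind t then 1 else 0))"
        unfolding f4_def by (rule integral_cong) simp
      also have "\<dots> = ?w0 * integral {t0..tf} (\<lambda>t. if ?ind t then (1::real) else 0)"
        by simp
      also have "integral {t0..tf} (\<lambda>t. if ?ind t then (1::real) else 0) = lam"
        using ind_integral(2)[of tau "tau + lam" t0 tf] lam0 t0tau lamtf by simp
      finally show ?thesis by simp
    qed
    have b3: "\<bar>integral {t0..tf} f3 - integral {t0..tf} f4\<bar> \<le> \<epsilon> / 2 * lam"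
    proof -
      have pt: "norm (f3 t - f4 t) \<le> \<epsilon> / 2 * (if ?ind t then 1 else 0)" if t: "t \<in> {t0..tf}" for t
      proof (cases "?ind t")
        case True
        have et: "norm (?e t) \<le> C * lam" and et1: "norm (?e t) < 1" using eb[OF lam0 lamdE t] by auto
        have xlK1: "xl lam t \<in> K1" using inK1[OF xK[OF t], of "xl lam t"] et1 by simp
        have dtt: "dist t tau < eta2" "dist t tau \<le> lam" using True lameta2 by (auto simp: dist_real_def)
        have "dist (x t) (x tau) < eta / 2" using ceta2 t dtt by blast
        then have "dist (xl lam t) (x tau) < C * lam + eta / 2"
          using et dist_triangle[of "xl lam t" "x tau" "x t"] by (simp add: dist_norm)
        then have "dist (t, xl lam t) (tau, x tau) < eta"
        proof -
          assume a: "dist (xl lam t) (x tau) < C * lam + eta / 2"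
          have "dist (t, xl lam t) (tau, x tau) \<le> dist t tau + dist (xl lam t) (x tau)"
            unfolding dist_Pair_Pair by (rule sqrt_sum_squares_le_sum) auto
          also have "\<dots> < lam + (C * lam + eta / 2)" using dtt a by simp
          also have "\<dots> \<le> eta" using lameta by (simp add: algebra_simps)
          finally show ?thesis .
        qed
        then have "dist (psi1 (t, xl lam t)) (psi1 (tau, x tau)) < \<epsilon> / 2"
          using ceta t xlK1 by blast
        then show ?thesis using True by (simp add: f3_def f4_def psi1_def dist_real_def)
      next
        case False
        then have "f3 t = 0" "f4 t = 0" unfolding f3_def f4_def by (simp_all only: if_False)
        then show ?thesis using e False by simp
      qed
      have "norm (integral {t0..tf} (\<lambda>t. f3 t - f4 t)) \<le> integral {t0..tf} (\<lambda>t. \<epsilon> / 2 * (if ?ind t then 1 else 0))"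
        by (rule integral_norm_bound_integral[OF integrable_diff[OF i3 i4] _ pt])
           (use integrable_cmul[OF ind_integrable, of "\<epsilon>/2"] in simp)
      also have "\<dots> = \<epsilon> / 2 * integral {t0..tf} (\<lambda>t. if ?ind t then (1::real) else 0)" by simp
      also have "integral {t0..tf} (\<lambda>t. if ?ind t then (1::real) else 0) = lam"
        using ind_integral(2)[of tau "tau + lam" t0 tf] lam0 t0tau lamtf by simp
      finally show ?thesis by (simp add: integral_diff[OF i3 i4])
    qed
    have "integral {t0..tf} (\<lambda>t. b t \<bullet> (xl lam t - x t)) + lam * ?w0
        = - integral {t0..tf} f2 - (integral {t0..tf} f3 - integral {t0..tf} f4)"
      using sum0 int4 by (simp add: f1_def[abs_def])
    also have "\<bar>\<dots>\<bar> \<le> \<epsilon> / 2 * lam + \<epsilon> / 2 * lam" using b2 b3 by linarith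
    finally show "\<bar>integral {t0..tf} (\<lambda>t. b t \<bullet> (xl lam t - x t)) + lam * ?w0\<bar> \<le> \<epsilon> * lam" by simp
  qed
qed

end

lemma at_right0_tendstoI:
  fixes f :: "real \<Rightarrow> real"
  assumes "\<And>\<epsilon>. \<epsilon> > 0 \<Longrightarrow> \<exists>\<delta>>0. \<forall>lam. 0 < lam \<and> lam < \<delta> \<longrightarrow> \<bar>f lam - l\<bar> \<le> \<epsilon>"
  shows "(f \<longlongrightarrow> l) (at_right 0)"
  unfolding Lim_within
proof (intro allI impI)
  fix e :: real assume e: "e > 0"
  obtain d where d: "d > 0" "\<forall>lam. 0 < lam \<and> lam < d \<longrightarrow> \<bar>f lam - l\<bar> \<le> e / 2"
    using assms[of "e/2"] e by auto
  show "\<exists>d>0. \<forall>x\<in>{0<..}. 0 < dist x 0 \<and> dist x 0 < d \<longrightarrow> dist (f x) l < e"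
    using d e by (intro exI[of _ d]) (auto simp: dist_real_def)
qed

lemma integral_pos_cont:
  fixes f :: "real \<Rightarrow> real"
  assumes ab: "a < b" and c: "continuous_on {a..b} f" and pos: "\<And>t. t \<in> {a..b} \<Longrightarrow> f t > 0"
  shows "integral {a..b} f > 0"
proof -
  obtain s where s: "s \<in> {a..b}" "\<forall>t\<in>{a..b}. f s \<le> f t"
    using continuous_attains_inf[OF compact_Icc _ c] ab by auto
  have "integral {a..b} (\<lambda>t. f s) \<le> integral {a..b} f"
    by (rule integral_le) (use s c in \<open>auto intro: integrable_continuous_interval\<close>)
  moreover have "integral {a..b} (\<lambda>t. f s) = (b - a) * f s" using ab by simp
  moreover have "(b - a) * f s > 0" using ab pos[OF s(1)] by simp
  ultimately show ?thesis by linarith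
qed

lemma ln_quad_bound:
  fixes J J0 :: real
  assumes J: "J > 0" and J0: "J0 > 0"
  shows "\<bar>ln J - ln J0 - (J - J0) / J0\<bar> \<le> (J - J0)\<^sup>2 / (J * J0)"
proof -
  define u where "u = J / J0"
  have u: "u > 0" using J J0 unfolding u_def by (rule divide_pos_pos)
  have l1: "ln u \<le> u - 1" using ln_le_minus_one[OF u] .
  have "ln (1 / u) \<le> 1 / u - 1" using ln_le_minus_one u by simp
  then have l2: "ln u \<ge> 1 - 1 / u" using u by (simp add: ln_div)
  have eq1: "ln J - ln J0 = ln u" using J J0 by (simp add: u_def ln_div)
  have eq2: "(J - J0) / J0 = u - 1" using J0 by (simp add: u_def field_simps)
  have eq3: "(J - J0)\<^sup>2 / (J * J0) = (u - 1)\<^sup>2 / u"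
    using J J0 by (simp add: u_def field_simps power2_eq_square)
  have "1 - 1 / u - (u - 1) = - ((u - 1)\<^sup>2 / u)"
    using u by (simp add: field_simps power2_eq_square)
  then have "\<bar>ln u - (u - 1)\<bar> \<le> (u - 1)\<^sup>2 / u" using l1 l2 by linarith
  then show ?thesis using eq1 eq2 eq3 by simp
qed

lemma ln_lemma:
  fixes J L :: "real \<Rightarrow> real"
  assumes J0: "J0 > 0"
    and lin: "\<And>\<epsilon>. \<epsilon> > 0 \<Longrightarrow> \<exists>\<delta>>0. \<forall>lam. 0 < lam \<and> lam < \<delta> \<longrightarrow> \<bar>J lam - J0 - L lam\<bar> \<le> \<epsilon> * lam"
    and lip: "\<exists>B \<delta>. \<delta> > 0 \<and> (\<forall>lam. 0 < lam \<and> lam < \<delta> \<longrightarrow> \<bar>J lam - J0\<bar> \<le> B * lam)"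
  shows "((\<lambda>lam. (ln (J lam) - ln J0 - L lam / J0) / lam) \<longlongrightarrow> 0) (at_right 0)"
proof (rule at_right0_tendstoI)
  fix \<epsilon> :: real assume e: "\<epsilon> > 0"
  obtain B dB where dB: "dB > 0" and Bb: "\<forall>lam. 0 < lam \<and> lam < dB \<longrightarrow> \<bar>J lam - J0\<bar> \<le> B * lam"
    using lip by blast
  define B' where "B' = \<bar>B\<bar> + 1"
  have B': "B' > 0" "B \<le> B'" by (auto simp: B'_def)
  obtain d1 where d1: "d1 > 0" and l1: "\<forall>lam. 0 < lam \<and> lam < d1 \<longrightarrow> \<bar>J lam - J0 - L lam\<bar> \<le> (\<epsilon> * J0 / 2) * lam"
    using lin[of "\<epsilon> * J0 / 2"] e J0 by auto
  define \<delta> where "\<delta> = min (min dB d1) (min (J0 / (2 * B')) (\<epsilon> * J0\<^sup>2 / (4 * B'\<^sup>2)))"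
  have dpos: "\<delta> > 0" using dB d1 J0 B' e by (simp add: \<delta>_def)
  show "\<exists>\<delta>>0. \<forall>lam. 0 < lam \<and> lam < \<delta> \<longrightarrow> \<bar>(ln (J lam) - ln J0 - L lam / J0) / lam - 0\<bar> \<le> \<epsilon>"
  proof (intro exI[of _ \<delta>] conjI allI impI dpos)
    fix lam assume lam: "0 < lam \<and> lam < \<delta>"
    have lam0: "lam > 0" using lam by simp
    have dJ: "\<bar>J lam - J0\<bar> \<le> B' * lam" using Bb lam B' by (auto simp: \<delta>_def intro: order_trans mult_right_mono)
    have "B' * lam < J0 / 2" using lam B' by (auto simp: \<delta>_def field_simps)
    then have Jlow: "J lam > J0 / 2" using dJ by linarith
    have Jpos: "J lam > 0" using Jlow J0 by linarith
    have q: "\<bar>ln (J lam) - ln J0 - (J lam - J0) / J0\<bar> \<le> (J lam - J0)\<^sup>2 / (J lam * J0)"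
      by (rule ln_quad_bound[OF Jpos J0])
    have "(J lam - J0)\<^sup>2 \<le> (B' * lam)\<^sup>2"
      using dJ by (metis abs_ge_zero power2_abs power_mono)
    moreover have "J lam * J0 \<ge> J0\<^sup>2 / 2" using Jlow J0 by (simp add: power2_eq_square mult_right_mono less_imp_le)
    ultimately have "(J lam - J0)\<^sup>2 / (J lam * J0) \<le> (B' * lam)\<^sup>2 / (J0\<^sup>2 / 2)"
      using J0 by (intro frac_le) auto
    also have "\<dots> = (2 * B'\<^sup>2 * lam / J0\<^sup>2) * lam" by (simp add: field_simps power2_eq_square)
    also have "\<dots> \<le> (\<epsilon> / 2) * lam"
    proof -
      have "lam < \<epsilon> * J0\<^sup>2 / (4 * B'\<^sup>2)" using lam by (simp add: \<delta>_def)
      then have "2 * B'\<^sup>2 * lam / J0\<^sup>2 \<le> \<epsilon> / 2" using B' J0 by (simp add: field_simps)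
      then show ?thesis using lam0 by (rule mult_right_mono[OF _ less_imp_le])
    qed
    finally have t1: "\<bar>ln (J lam) - ln J0 - (J lam - J0) / J0\<bar> \<le> (\<epsilon> / 2) * lam" using q by linarith
    have "\<bar>(J lam - J0) / J0 - L lam / J0\<bar> = \<bar>J lam - J0 - L lam\<bar> / J0"
      using J0 by (simp add: diff_divide_distrib[symmetric])
    also have "\<dots> \<le> ((\<epsilon> * J0 / 2) * lam) / J0" using l1 lam J0 by (intro divide_right_mono) (auto simp: \<delta>_def)
    also have "\<dots> = (\<epsilon> / 2) * lam" using J0 by simp
    finally have t2: "\<bar>(J lam - J0) / J0 - L lam / J0\<bar> \<le> (\<epsilon> / 2) * lam" .
    have "\<bar>ln (J lam) - ln J0 - L lam / J0\<bar> \<le> \<epsilon> * lam" using t1 t2 by linarith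
    then show "\<bar>(ln (J lam) - ln J0 - L lam / J0) / lam - 0\<bar> \<le> \<epsilon>"
      using lam0 by (simp add: abs_div pos_divide_le_eq)
  qed
qed

context needle begin

lemma xl0: assumes "t \<in> {t0..tf}" shows "xl 0 t = x t"
proof -
  obtain C dE where C0: "C \<ge> 0" and dE: "dE > 0" "dE \<le> d0"
    and eb: "\<And>lam t. 0 \<le> lam \<Longrightarrow> lam < dE \<Longrightarrow> t \<in> {t0..tf} \<Longrightarrow>
        norm (xl lam t - x t) \<le> C * lam \<and> norm (xl lam t - x t) < 1"
    using err_bound by blast
  have "norm (xl 0 t - x t) \<le> C * 0" using eb[of 0 t] assms dE by simp
  then show ?thesis by simp
qed

end

context needle begin

lemma phi_est:
  assumes C: "C1 \<phi> D"
  shows "\<forall>\<epsilon>>0. \<exists>\<delta>>0. \<forall>lam. 0 < lam \<and> lam < \<delta> \<longrightarrow>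
      \<bar>integral {t0..tf} (\<lambda>t. \<phi> (xl lam t)) - integral {t0..tf} (\<lambda>t. \<phi> (x t))
        - integral {t0..tf} (\<lambda>t. D (x t) \<bullet> (xl lam t - x t))\<bar> \<le> \<epsilon> * lam"
    and "\<exists>B \<delta>. \<delta> > 0 \<and> (\<forall>lam. 0 < lam \<and> lam < \<delta> \<longrightarrow>
      \<bar>integral {t0..tf} (\<lambda>t. \<phi> (xl lam t)) - integral {t0..tf} (\<lambda>t. \<phi> (x t))\<bar> \<le> B * lam)"
proof -
  obtain C dE where C0: "C \<ge> 0" and dE: "dE > 0" "dE \<le> d0"
    and eb: "\<And>lam t. 0 \<le> lam \<Longrightarrow> lam < dE \<Longrightarrow> t \<in> {t0..tf} \<Longrightarrow>
        norm (xl lam t - x t) \<le> C * lam \<and> norm (xl lam t - x t) < 1"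
    using err_bound by blast
  define T where "T = tf - t0"
  have T0: "T > 0" using t0tau tautf by (simp add: T_def)
  have cphi: "continuous_on UNIV \<phi>" by (rule C1_cont[OF C])
  have cD: "continuous_on UNIV D" using C by (simp add: C1_def)
  have ints: "(\<lambda>t. \<phi> (xl lam t)) integrable_on {t0..tf}" "(\<lambda>t. \<phi> (x t)) integrable_on {t0..tf}"
     "(\<lambda>t. D (x t) \<bullet> (xl lam t - x t)) integrable_on {t0..tf}"
    if "0 \<le> lam" "lam < d0" for lam
    by (intro integrable_continuous_interval continuous_intros continuous_on_compose2[OF cphi] 
          continuous_on_compose2[OF cD] xlc that xc; simp)+
  have diffeq: "integral {t0..tf} (\<lambda>t. \<phi> (xl lam t)) - integral {t0..tf} (\<lambda>t. \<phi> (x t))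
        - integral {t0..tf} (\<lambda>t. D (x t) \<bullet> (xl lam t - x t))
      = integral {t0..tf} (\<lambda>t. \<phi> (xl lam t) - \<phi> (x t) - D (x t) \<bullet> (xl lam t - x t))"
    "integral {t0..tf} (\<lambda>t. \<phi> (xl lam t)) - integral {t0..tf} (\<lambda>t. \<phi> (x t))
      = integral {t0..tf} (\<lambda>t. \<phi> (xl lam t) - \<phi> (x t))"
    if "0 \<le> lam" "lam < d0" for lam
    using ints[OF that] by (simp_all add: integral_diff integrable_diff)
  show "\<forall>\<epsilon>>0. \<exists>\<delta>>0. \<forall>lam. 0 < lam \<and> lam < \<delta> \<longrightarrow>
      \<bar>integral {t0..tf} (\<lambda>t. \<phi> (xl lam t)) - integral {t0..tf} (\<lambda>t. \<phi> (x t))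
        - integral {t0..tf} (\<lambda>t. D (x t) \<bullet> (xl lam t - x t))\<bar> \<le> \<epsilon> * lam"
  proof (intro allI impI)
    fix \<epsilon> :: real assume e: "\<epsilon> > 0"
    define e1 where "e1 = \<epsilon> / (C * T + 1)"
    have ct: "C * T \<ge> 0" using C0 T0 by simp
    have e1: "e1 > 0" unfolding e1_def using e ct by (intro divide_pos_pos) auto
    obtain d1 where d1: "d1 > 0" and ex: "\<forall>y\<in>K. \<forall>z. norm (z - y) < d1 \<longrightarrow>
        \<bar>\<phi> z - \<phi> y - D y \<bullet> (z - y)\<bar> \<le> e1 * norm (z - y)"
      using C1_bounds(2)[OF C K_compact] e1 by blast
    define \<delta> where "\<delta> = min dE (d1 / (C + 1))"
    have dpos: "\<delta> > 0" using dE d1 C0 by (simp add: \<delta>_def)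
    show "\<exists>\<delta>>0. \<forall>lam. 0 < lam \<and> lam < \<delta> \<longrightarrow>
      \<bar>integral {t0..tf} (\<lambda>t. \<phi> (xl lam t)) - integral {t0..tf} (\<lambda>t. \<phi> (x t))
        - integral {t0..tf} (\<lambda>t. D (x t) \<bullet> (xl lam t - x t))\<bar> \<le> \<epsilon> * lam"
    proof (intro exI[of _ \<delta>] conjI allI impI dpos)
      fix lam assume lam: "0 < lam \<and> lam < \<delta>"
      have lam0: "0 \<le> lam" and lamdE: "lam < dE" and lamd0: "lam < d0" using lam dE by (auto simp: \<delta>_def)
      have "(C + 1) * lam < d1" using lam C0 by (auto simp: \<delta>_def field_simps)
      then have Cl: "C * lam < d1" using lam by (simp add: algebra_simps)
      have pt: "norm (\<phi> (xl lam t) - \<phi> (x t) - D (x t) \<bullet> (xl lam t - x t)) \<le> e1 * (C * lam)"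
        if t: "t \<in> {t0..tf}" for t
      proof -
        have et: "norm (xl lam t - x t) \<le> C * lam" using eb[OF lam0 lamdE t] by simp
        then have "\<bar>\<phi> (xl lam t) - \<phi> (x t) - D (x t) \<bullet> (xl lam t - x t)\<bar> \<le> e1 * norm (xl lam t - x t)"
          using ex xK[OF t] Cl by simp
        also have "\<dots> \<le> e1 * (C * lam)" using et e1 by (simp add: mult_left_mono)
        finally show ?thesis by simp
      qed
      have "norm (integral {t0..tf} (\<lambda>t. \<phi> (xl lam t) - \<phi> (x t) - D (x t) \<bullet> (xl lam t - x t)))
          \<le> integral {t0..tf} (\<lambda>t. e1 * (C * lam))"
        by (rule integral_norm_bound_integral[OF _ integrable_const_ivl pt])
           (use ints[OF lam0 lamd0] in \<open>simp add: integrable_diff\<close>)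
      also have "\<dots> = T * (e1 * (C * lam))" using T0 by (simp add: T_def)
      also have "\<dots> = (C * T * e1) * lam" by (simp add: algebra_simps)
      also have "\<dots> \<le> \<epsilon> * lam"
      proof -
        have "C * T * e1 = \<epsilon> * ((C * T) / (C * T + 1))" by (simp add: e1_def field_simps)
        also have "\<dots> \<le> \<epsilon> * 1" using ct e by (intro mult_left_mono) auto
        finally have "C * T * e1 \<le> \<epsilon>" by simp
          then show ?thesis using lam0 by (rule mult_right_mono)
      qed
      finally show "\<bar>integral {t0..tf} (\<lambda>t. \<phi> (xl lam t)) - integral {t0..tf} (\<lambda>t. \<phi> (x t))
        - integral {t0..tf} (\<lambda>t. D (x t) \<bullet> (xl lam t - x t))\<bar> \<le> \<epsilon> * lam"
        using diffeq(1)[OF lam0 lamd0] by simp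
    qed
  qed
  show "\<exists>B \<delta>. \<delta> > 0 \<and> (\<forall>lam. 0 < lam \<and> lam < \<delta> \<longrightarrow>
      \<bar>integral {t0..tf} (\<lambda>t. \<phi> (xl lam t)) - integral {t0..tf} (\<lambda>t. \<phi> (x t))\<bar> \<le> B * lam)"
  proof -
    obtain Lp where Lp0: "Lp \<ge> 0" and lip: "\<forall>y\<in>K. \<forall>z. norm (z - y) \<le> 1 \<longrightarrow> \<bar>\<phi> z - \<phi> y\<bar> \<le> Lp * norm (z - y)"
      using C1_bounds(1)[OF C K_compact] by blast
    show ?thesis
    proof (rule exI[of _ "T * (Lp * C)"], rule exI[of _ dE], intro conjI allI impI dE(1))
      fix lam assume lam: "0 < lam \<and> lam < dE"
      have lam0: "0 \<le> lam" and lamd0: "lam < d0" using lam dE by auto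
      have pt: "norm (\<phi> (xl lam t) - \<phi> (x t)) \<le> Lp * (C * lam)" if t: "t \<in> {t0..tf}" for t
      proof -
        have et: "norm (xl lam t - x t) \<le> C * lam" "norm (xl lam t - x t) < 1"
          using eb[of lam t] lam t by auto
        then have "\<bar>\<phi> (xl lam t) - \<phi> (x t)\<bar> \<le> Lp * norm (xl lam t - x t)"
          using lip xK[OF t] by simp
        also have "\<dots> \<le> Lp * (C * lam)" using et Lp0 by (simp add: mult_left_mono)
        finally show ?thesis by simp
      qed
      have "norm (integral {t0..tf} (\<lambda>t. \<phi> (xl lam t) - \<phi> (x t))) \<le> integral {t0..tf} (\<lambda>t. Lp * (C * lam))"
        by (rule integral_norm_bound_integral[OF _ integrable_const_ivl pt])
           (use ints[OF lam0 lamd0] in \<open>simp add: integrable_diff\<close>)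
      also have "\<dots> = T * (Lp * C) * lam" using T0 by (simp add: T_def)
      finally show "\<bar>integral {t0..tf} (\<lambda>t. \<phi> (xl lam t)) - integral {t0..tf} (\<lambda>t. \<phi> (x t))\<bar> \<le> T * (Lp * C) * lam"
        using diffeq(2)[OF lam0 lamd0] by simp
    qed
  qed
qed

end

context needle_adj begin

lemma be_lim:
  "((\<lambda>lam. integral {t0..tf} (\<lambda>t. b t \<bullet> (xl lam t - x t)) / lam)
      \<longlongrightarrow> - (rho tau \<bullet> (P tau (x tau) - Fc (x tau)))) (at_right 0)"
proof (rule at_right0_tendstoI)
  fix \<epsilon> :: real assume e: "\<epsilon> > 0"
  obtain \<delta> where d: "\<delta> > 0" and est: "\<forall>lam. 0 < lam \<and> lam < \<delta> \<longrightarrow>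
    \<bar>integral {t0..tf} (\<lambda>t. b t \<bullet> (xl lam t - x t)) + lam * (rho tau \<bullet> (P tau (x tau) - Fc (x tau)))\<bar> \<le> \<epsilon> * lam"
    using main_est[OF e] by blast
  show "\<exists>\<delta>>0. \<forall>lam. 0 < lam \<and> lam < \<delta> \<longrightarrow>
      \<bar>integral {t0..tf} (\<lambda>t. b t \<bullet> (xl lam t - x t)) / lam - - (rho tau \<bullet> (P tau (x tau) - Fc (x tau)))\<bar> \<le> \<epsilon>"
  proof (intro exI[of _ \<delta>] conjI allI impI d)
    fix lam assume lam: "0 < lam \<and> lam < \<delta>"
    let ?I = "integral {t0..tf} (\<lambda>t. b t \<bullet> (xl lam t - x t))"
    let ?V = "rho tau \<bullet> (P tau (x tau) - Fc (x tau))"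
    have "?I / lam - - ?V = (?I + lam * ?V) / lam" using lam by (simp add: field_simps)
    then have "\<bar>?I / lam - - ?V\<bar> = \<bar>?I + lam * ?V\<bar> / lam" using lam by (simp add: abs_div)
    also have "\<dots> \<le> \<epsilon>" using est lam by (simp add: pos_divide_le_eq)
    finally show "\<bar>?I / lam - - ?V\<bar> \<le> \<epsilon>" .
  qed
qed

end

theorem proposition1:
  fixes g :: "real^'n \<Rightarrow> real^'n"
    and h :: "real^'n \<Rightarrow> real^'m^'n"
    and f :: "real^'n \<Rightarrow> real^'m \<Rightarrow> real^'n"
    and mu :: "real^'n \<Rightarrow> real^'m"
    and mustar :: "real \<Rightarrow> real^'m"
    and proj :: "real^'n \<Rightarrow> real^'v"
    and Sig :: "real^'v^'v"
    and eta :: real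
    and p :: "real^'v \<Rightarrow> real"
    and smp :: "nat \<Rightarrow> real^'v"
    and N :: nat
    and t0 tf tau :: real
    and x0 :: "real^'n"
    and x :: "real \<Rightarrow> real^'n"
    and xl :: "real \<Rightarrow> real \<Rightarrow> real^'n"
    and rho :: "real \<Rightarrow> real^'n"
  assumes f_def: "\<And>y u. f y u = g y + h y *v u"
    and g_smooth: "smooth_vec g"
    and h_smooth: "smooth_mat h"
    and mu_smooth: "smooth_vec mu"
    and proj_lin: "linear proj"
    and Sigma_pd: "pos_def Sig"
    and eta_pos: "eta > 0"
    and p_nonneg: "\<And>s. p s \<ge> 0"
    and times: "t0 < tau" "tau < tf"
    and mustar_cont: "continuous_on {t0..tf} mustar"
    and x_init: "x t0 = x0"
    and x_ode: "\<And>t. t \<in> {t0..tf} \<Longrightarrow>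
                  (x has_vector_derivative f (x t) (mu (x t))) (at t within {t0..tf})"
    and xl_sol: "\<exists>\<delta>>0. \<forall>lam. 0 \<le> lam \<and> lam < \<delta> \<longrightarrow>
                   continuous_on {t0..tf} (xl lam) \<and>
                   (\<forall>t\<in>{t0..tf}. xl lam t = x0 + integral {t0..t}
                      (\<lambda>r. if tau \<le> r \<and> r < tau + lam
                            then f (xl lam r) (mustar r)
                            else f (xl lam r) (mu (xl lam r))))"
    and rho_final: "rho tf = 0"
    and rho_ode: "\<And>t. t \<in> {t0..tf} \<Longrightarrow>
          (rho has_vector_derivative
             ((1 / (tf - t0)) *\<^sub>R
                (\<Sum>i\<in>{1..N}. (p (smp i) / qstat t0 tf (psi eta Sig proj) (xl 0) (smp i))
                    *\<^sub>R grad (psi eta Sig proj (smp i)) (x t))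
              - transpose (jacobian (\<lambda>y. f y (mu (x t))) (at (x t))
                  + jacobian (f (x t)) (at (mu (x t))) ** jacobian mu (at (x t))) *v rho t))
          (at t within {t0..tf})"
  shows "((\<lambda>lam. DKL N smp p (qstat t0 tf (psi eta Sig proj) (xl lam)))
           has_real_derivative
             (rho tau \<bullet> (f (x tau) (mustar tau) - f (x tau) (mu (x tau)))))
         (at_right 0)"
proof -
  define I where "I = {t0..tf}"
  define T where "T = tf - t0"
  have T0: "T > 0" using times by (simp add: T_def)
  define Dg where "Dg j = grad (\<lambda>y. g y $ j)" for j
  define Dh where "Dh j k = grad (\<lambda>y. h y $ j $ k)" for j k
  define Dmu where "Dmu k = grad (\<lambda>y. mu y $ k)" for k
  have Cg: "C1 (\<lambda>y. g y $ j) (Dg j)" for j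
    unfolding Dg_def by (rule C1_smooth) (use g_smooth in \<open>simp add: smooth_vec_def\<close>)
  have Ch: "C1 (\<lambda>y. h y $ j $ k) (Dh j k)" for j k
    unfolding Dh_def by (rule C1_smooth) (use h_smooth in \<open>simp add: smooth_mat_def\<close>)
  have Cmu: "C1 (\<lambda>y. mu y $ k) (Dmu k)" for k
    unfolding Dmu_def by (rule C1_smooth) (use mu_smooth in \<open>simp add: smooth_vec_def\<close>)
  define DF where "DF j y = Dg j y + (\<Sum>k\<in>UNIV. h y $ j $ k *\<^sub>R Dmu k y + mu y $ k *\<^sub>R Dh j k y)" for j y
  have fcomp: "f y u $ j = g y $ j + (\<Sum>k\<in>UNIV. h y $ j $ k * u $ k)" for y u j
    by (simp add: f_def matrix_vector_mult_def)
  have CF: "C1 (\<lambda>y. f y (mu y) $ j) (DF j)" for j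
  proof -
    have "C1 (\<lambda>y. g y $ j + (\<Sum>k\<in>UNIV. h y $ j $ k * mu y $ k)) (DF j)"
      unfolding DF_def[abs_def]
      by (intro C1_add Cg C1_sum C1_mult Ch Cmu) auto
    then show ?thesis by (simp add: fcomp)
  qed
  have Pc: "continuous_on ({t0..tf} \<times> UNIV) (\<lambda>z. f (snd z) (mustar (fst z)))"
  proof -
    have cg: "continuous_on ({t0..tf} \<times> UNIV) (\<lambda>z. g (snd z) $ j)" for j
      by (rule continuous_on_compose2[OF C1_cont[OF Cg] continuous_on_snd]) auto
    have ch: "continuous_on ({t0..tf} \<times> UNIV) (\<lambda>z. h (snd z) $ j $ k)" for j k
      by (rule continuous_on_compose2[OF C1_cont[OF Ch] continuous_on_snd]) auto
    have cm: "continuous_on ({t0..tf} \<times> (UNIV::(real^'n) set)) (\<lambda>z. mustar (fst z))"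
      by (rule continuous_on_compose2[OF mustar_cont continuous_on_fst]) auto
    have cmk: "continuous_on ({t0..tf} \<times> (UNIV::(real^'n) set)) (\<lambda>z. mustar (fst z) $ k)" for k
      by (rule bounded_linear.continuous_on[OF bounded_linear_vec_nth cm])
    have "continuous_on ({t0..tf} \<times> UNIV) (\<lambda>z. \<chi> j. g (snd z) $ j + (\<Sum>k\<in>UNIV. h (snd z) $ j $ k * mustar (fst z) $ k))"
      by (intro continuous_on_vec_lambda continuous_intros cg ch cmk)
    moreover have "(\<lambda>z. \<chi> j. g (snd z) $ j + (\<Sum>k\<in>UNIV. h (snd z) $ j $ k * mustar (fst z) $ k))
        = (\<lambda>z. f (snd z) (mustar (fst z)))"
      by (simp add: fun_eq_iff vec_eq_iff fcomp)
    ultimately show ?thesis by metis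
  qed
  have xc: "continuous_on {t0..tf} x"
    using x_ode by (meson continuous_on_eq_continuous_within has_vector_derivative_continuous)
  have cFc: "continuous_on UNIV (\<lambda>y. f y (mu y))"
  proof -
    have "continuous_on UNIV (\<lambda>y. \<chi> j. f y (mu y) $ j)"
      by (intro continuous_on_vec_lambda C1_cont[OF CF])
    then show ?thesis by simp
  qed
  have xint: "x t = x0 + integral {t0..t} (\<lambda>r. f (x r) (mu (x r)))" if t: "t \<in> {t0..tf}" for t
  proof -
    have "((\<lambda>r. f (x r) (mu (x r))) has_integral (x t - x t0)) {t0..t}"
    proof (rule fundamental_theorem_of_calculus)
      show "t0 \<le> t" using t by simp
      fix r assume r: "r \<in> {t0..t}"
      show "(x has_vector_derivative f (x r) (mu (x r))) (at r within {t0..t})"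
        by (rule has_vector_derivative_within_subset[OF x_ode]) (use r t in auto)
    qed
    then show ?thesis using x_init by (simp add: integral_unique)
  qed
  obtain d0 where d0: "d0 > 0" and xlp: "\<And>lam. 0 \<le> lam \<and> lam < d0 \<Longrightarrow>
                   continuous_on {t0..tf} (xl lam) \<and>
                   (\<forall>t\<in>{t0..tf}. xl lam t = x0 + integral {t0..t}
                      (\<lambda>r. if tau \<le> r \<and> r < tau + lam
                            then f (xl lam r) (mustar r)
                            else f (xl lam r) (mu (xl lam r))))"
    using xl_sol by blast
  interpret N: needle "\<lambda>y. f y (mu y)" DF "\<lambda>r y. f y (mustar r)" x xl x0 t0 tf tau d0
  proof
    show "C1 (\<lambda>y. f y (mu y) $ j) (DF j)" for j by (rule CF)
    show "continuous_on ({t0..tf} \<times> UNIV) (\<lambda>z. f (snd z) (mustar (fst z)))" by (rule Pc)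
    show "t0 < tau" "tau < tf" by (rule times)+
    show "continuous_on {t0..tf} x" by (rule xc)
    show "x t = x0 + integral {t0..t} (\<lambda>r. f (x r) (mu (x r)))" if "t \<in> {t0..tf}" for t
      by (rule xint[OF that])
    show "d0 > 0" by (rule d0)
    show "continuous_on {t0..tf} (xl lam)" if "0 \<le> lam" "lam < d0" for lam
      using xlp that by blast
    show "xl lam t = x0 + integral {t0..t} (\<lambda>r. if tau \<le> r \<and> r < tau + lam then f (xl lam r) (mustar r) else f (xl lam r) (mu (xl lam r)))"
      if "0 \<le> lam" "lam < d0" "t \<in> {t0..tf}" for lam t
      using xlp that by blast
  qed
  define q0 where "q0 i = qstat t0 tf (psi eta Sig proj) (xl 0) (smp i)" for i
  define ps where "ps i = psi eta Sig proj (smp i)" for i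
  define b where "b t = (1 / (tf - t0)) *\<^sub>R (\<Sum>i\<in>{1..N}. (p (smp i) / q0 i) *\<^sub>R grad (ps i) (x t))" for t
  define A where "A t = jacobian (\<lambda>y. f y (mu (x t))) (at (x t))
                  + jacobian (f (x t)) (at (mu (x t))) ** jacobian mu (at (x t))" for t
  define rd where "rd t = b t - transpose (A t) *v rho t" for t
  have Cpsi: "C1 (ps i) (grad (ps i))" for i
    unfolding ps_def by (rule C1_psi[OF proj_lin])
  have rho_d: "(rho has_vector_derivative rd t) (at t within {t0..tf})" if "t \<in> {t0..tf}" for t
    using rho_ode[OF that] by (simp add: rd_def b_def A_def q0_def ps_def)
  have rd_eq: "rd t \<bullet> w = b t \<bullet> w - rho t \<bullet> (\<chi> j. DF j (x t) \<bullet> w)" for t w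
  proof -
    have "A t *v w = (\<chi> j. DF j (x t) \<bullet> w)"
      unfolding A_def DF_def by (rule closed_loop_jacobian[OF f_def Cg Ch Cmu])
    then show ?thesis
      by (simp add: rd_def inner_diff_left dot_lmul_matrix)
  qed
  have bc: "continuous_on {t0..tf} b"
  proof -
    have cg: "continuous_on {t0..tf} (\<lambda>t. grad (ps i) (x t))" for i
      by (rule continuous_on_compose2[OF _ xc]) (use Cpsi[of i] in \<open>auto simp: C1_def\<close>)
    show ?thesis unfolding b_def by (intro continuous_intros cg)
  qed
  interpret A: needle_adj "\<lambda>y. f y (mu y)" DF "\<lambda>r y. f y (mustar r)" x xl x0 t0 tf tau d0 rho b rd
  proof (rule needle_adj.intro[OF N.needle_axioms], unfold_locales)
    show "(rho has_vector_derivative rd t) (at t within {t0..tf})" if "t \<in> {t0..tf}" for t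
      by (rule rho_d[OF that])
    show "rd t \<bullet> w = b t \<bullet> w - rho t \<bullet> (\<chi> j. DF j (x t) \<bullet> w)" if "t \<in> {t0..tf}" for t w
      by (rule rd_eq)
    show "rho tf = 0" by (rule rho_final)
    show "continuous_on {t0..tf} b" by (rule bc)
  qed
  have ppos: "ps i y > 0" for i y unfolding ps_def psi_def using eta_pos by simp
  have cps: "continuous_on UNIV (ps i)" for i by (rule C1_cont[OF Cpsi])
  define J where "J i lam = integral {t0..tf} (\<lambda>t. ps i (xl lam t))" for i lam
  define J0 where "J0 i = integral {t0..tf} (\<lambda>t. ps i (x t))" for i
  define Lp where "Lp i lam = integral {t0..tf} (\<lambda>t. grad (ps i) (x t) \<bullet> (xl lam t - x t))" for i lam
  have Jpos: "J i lam > 0" if "0 \<le> lam" "lam < d0" for i lam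
    unfolding J_def
    by (rule integral_pos_cont[OF _ continuous_on_compose2[OF cps N.xlc[OF that]] ppos]) (use times in auto)
  have J0pos: "J0 i > 0" for i
    unfolding J0_def
    by (rule integral_pos_cont[OF _ continuous_on_compose2[OF cps xc] ppos]) (use times in auto)
  have qeq: "qstat t0 tf (psi eta Sig proj) (xl lam) (smp i) = (1 / T) * J i lam" for i lam
    by (simp add: qstat_def J_def ps_def T_def)
  have q0eq: "q0 i = (1 / T) * J0 i" for i
  proof -
    have "integral {t0..tf} (\<lambda>t. ps i (xl 0 t)) = integral {t0..tf} (\<lambda>t. ps i (x t))"
      by (rule integral_cong) (simp add: N.xl0)
    then show ?thesis by (simp add: q0_def qstat_def J0_def ps_def T_def)
  qed
  have alim: "((\<lambda>lam. (ln (J i lam) - ln (J0 i) - Lp i lam / J0 i) / lam) \<longlongrightarrow> 0) (at_right 0)" for i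
  proof (rule ln_lemma[OF J0pos])
    show "\<exists>\<delta>>0. \<forall>lam. 0 < lam \<and> lam < \<delta> \<longrightarrow> \<bar>J i lam - J0 i - Lp i lam\<bar> \<le> \<epsilon> * lam"
      if "\<epsilon> > 0" for \<epsilon>
      using N.phi_est(1)[OF Cpsi[of i]] that unfolding J_def J0_def Lp_def by blast
    show "\<exists>B \<delta>. \<delta> > 0 \<and> (\<forall>lam. 0 < lam \<and> lam < \<delta> \<longrightarrow> \<bar>J i lam - J0 i\<bar> \<le> B * lam)"
      using N.phi_est(2)[OF Cpsi[of i]] unfolding J_def J0_def by blast
  qed
  have beint: "integral {t0..tf} (\<lambda>t. b t \<bullet> (xl lam t - x t)) = (\<Sum>i\<in>{1..N}. p (smp i) * (Lp i lam / J0 i))"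
    if lam: "0 \<le> lam" "lam < d0" for lam
  proof -
    have gi: "(\<lambda>t. grad (ps i) (x t) \<bullet> (xl lam t - x t)) integrable_on {t0..tf}" for i
    proof -
      have cg: "continuous_on {t0..tf} (\<lambda>t. grad (ps i) (x t))"
        by (rule continuous_on_compose2[OF _ xc]) (use Cpsi[of i] in \<open>auto simp: C1_def\<close>)
      show ?thesis by (intro integrable_continuous_interval continuous_intros cg N.xlc lam xc)
    qed
    have "(\<lambda>t. b t \<bullet> (xl lam t - x t)) = (\<lambda>t. (1 / T) * (\<Sum>i\<in>{1..N}. (p (smp i) / q0 i) * (grad (ps i) (x t) \<bullet> (xl lam t - x t))))"
      by (simp add: fun_eq_iff b_def T_def inner_sum_left)
    moreover have ci: "(\<lambda>t. (p (smp i) / q0 i) * (grad (ps i) (x t) \<bullet> (xl lam t - x t))) integrable_on {t0..tf}" for i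
      using integrable_cmul[OF gi[of i], where c="p (smp i) / q0 i"] by simp
    moreover have cint: "integral {t0..tf} (\<lambda>t. (p (smp i) / q0 i) * (grad (ps i) (x t) \<bullet> (xl lam t - x t)))
        = (p (smp i) / q0 i) * Lp i lam" for i
      using integral_cmul[where c="p (smp i) / q0 i" and f="\<lambda>t. grad (ps i) (x t) \<bullet> (xl lam t - x t)" and S="{t0..tf}"]
      by (simp add: Lp_def)
    moreover have "integral {t0..tf} (\<lambda>t. (1 / T) * (\<Sum>i\<in>{1..N}. (p (smp i) / q0 i) * (grad (ps i) (x t) \<bullet> (xl lam t - x t))))
        = (1 / T) * integral {t0..tf} (\<lambda>t. \<Sum>i\<in>{1..N}. (p (smp i) / q0 i) * (grad (ps i) (x t) \<bullet> (xl lam t - x t)))"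
      using integral_cmul[where c="1 / T" and f="\<lambda>t. \<Sum>i\<in>{1..N}. (p (smp i) / q0 i) * (grad (ps i) (x t) \<bullet> (xl lam t - x t))" and S="{t0..tf}"]
      by simp
    ultimately have "integral {t0..tf} (\<lambda>t. b t \<bullet> (xl lam t - x t))
        = (1 / T) * (\<Sum>i\<in>{1..N}. (p (smp i) / q0 i) * Lp i lam)"
      by (simp only: integral_sum[OF finite_atLeastAtMost ci] cint)
    also have "\<dots> = (\<Sum>i\<in>{1..N}. p (smp i) * (Lp i lam / J0 i))"
      unfolding sum_distrib_left using T0 J0pos
      by (intro sum.cong refl) (simp add: q0eq field_simps)
    finally show ?thesis .
  qed
  define V where "V = rho tau \<bullet> (f (x tau) (mustar tau) - f (x tau) (mu (x tau)))"
  have blim: "((\<lambda>lam. integral {t0..tf} (\<lambda>t. b t \<bullet> (xl lam t - x t)) / lam) \<longlongrightarrow> - V) (at_right 0)"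
    using A.be_lim by (simp add: V_def)
  have rhs_lim: "((\<lambda>lam. - (\<Sum>i\<in>{1..N}. p (smp i) * ((ln (J i lam) - ln (J0 i) - Lp i lam / J0 i) / lam))
       - integral {t0..tf} (\<lambda>t. b t \<bullet> (xl lam t - x t)) / lam) \<longlongrightarrow> V) (at_right 0)"
  proof -
    have "((\<lambda>lam. - (\<Sum>i\<in>{1..N}. p (smp i) * ((ln (J i lam) - ln (J0 i) - Lp i lam / J0 i) / lam))
       - integral {t0..tf} (\<lambda>t. b t \<bullet> (xl lam t - x t)) / lam) \<longlongrightarrow> - (\<Sum>i\<in>{1..N}. p (smp i) * 0) - - V) (at_right 0)"
      by (intro tendsto_diff tendsto_minus tendsto_sum tendsto_mult tendsto_const alim blim)
    then show ?thesis by simp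
  qed
  have ev: "\<forall>\<^sub>F lam in at_right 0.
      - (\<Sum>i\<in>{1..N}. p (smp i) * ((ln (J i lam) - ln (J0 i) - Lp i lam / J0 i) / lam))
       - integral {t0..tf} (\<lambda>t. b t \<bullet> (xl lam t - x t)) / lam
      = (DKL N smp p (qstat t0 tf (psi eta Sig proj) (xl lam)) - DKL N smp p (qstat t0 tf (psi eta Sig proj) (xl 0))) / (lam - 0)"
    unfolding eventually_at_right_field
  proof (intro exI[of _ d0] conjI allI impI d0)
    fix lam :: real assume lam: "0 < lam" "lam < d0"
    have lnq: "ln (qstat t0 tf (psi eta Sig proj) (xl lam) (smp i)) = ln (J i lam) - ln T" for i
      using Jpos[of lam i] lam T0 by (simp add: qeq ln_div)
    have lnq0: "ln (qstat t0 tf (psi eta Sig proj) (xl 0) (smp i)) = ln (J0 i) - ln T" for i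
      using J0pos[of i] T0 by (simp add: q0eq[unfolded q0_def] ln_div)
    have "DKL N smp p (qstat t0 tf (psi eta Sig proj) (xl lam)) - DKL N smp p (qstat t0 tf (psi eta Sig proj) (xl 0))
        = - (\<Sum>i\<in>{1..N}. p (smp i) * (ln (J i lam) - ln (J0 i)))"
    proof -
      have "DKL N smp p (qstat t0 tf (psi eta Sig proj) (xl lam)) - DKL N smp p (qstat t0 tf (psi eta Sig proj) (xl 0))
          = (\<Sum>i\<in>{1..N}. p (smp i) * ln (qstat t0 tf (psi eta Sig proj) (xl 0) (smp i))
              - p (smp i) * ln (qstat t0 tf (psi eta Sig proj) (xl lam) (smp i)))"
        by (simp add: DKL_def sum_subtractf)
      also have "\<dots> = (\<Sum>i\<in>{1..N}. - (p (smp i) * (ln (J i lam) - ln (J0 i))))"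
        by (intro sum.cong refl) (simp add: lnq lnq0 algebra_simps)
      also have "\<dots> = - (\<Sum>i\<in>{1..N}. p (smp i) * (ln (J i lam) - ln (J0 i)))"
        by (simp add: sum_negf)
      finally show ?thesis .
    qed
    moreover have "- (\<Sum>i\<in>{1..N}. p (smp i) * ((ln (J i lam) - ln (J0 i) - Lp i lam / J0 i) / lam))
       - integral {t0..tf} (\<lambda>t. b t \<bullet> (xl lam t - x t)) / lam
       = - (\<Sum>i\<in>{1..N}. p (smp i) * (ln (J i lam) - ln (J0 i))) / lam"
    proof -
      let ?X = "\<lambda>i. ln (J i lam) - ln (J0 i)" and ?Y = "\<lambda>i. Lp i lam / J0 i" and ?p = "\<lambda>i. p (smp i)"
      have bi: "integral {t0..tf} (\<lambda>t. b t \<bullet> (xl lam t - x t)) = (\<Sum>i\<in>{1..N}. ?p i * ?Y i)"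
        using beint lam by simp
      have e1: "(\<Sum>i\<in>{1..N}. ?p i * ((?X i - ?Y i) / lam)) = (\<Sum>i\<in>{1..N}. ?p i * (?X i - ?Y i)) / lam"
        by (simp add: sum_divide_distrib)
      have e2: "(\<Sum>i\<in>{1..N}. ?p i * (?X i - ?Y i)) + (\<Sum>i\<in>{1..N}. ?p i * ?Y i) = (\<Sum>i\<in>{1..N}. ?p i * ?X i)"
        by (simp add: sum.distrib[symmetric] algebra_simps)
      have "- (\<Sum>i\<in>{1..N}. ?p i * ((?X i - ?Y i) / lam)) - (\<Sum>i\<in>{1..N}. ?p i * ?Y i) / lam
          = - ((\<Sum>i\<in>{1..N}. ?p i * (?X i - ?Y i)) + (\<Sum>i\<in>{1..N}. ?p i * ?Y i)) / lam"
        unfolding e1 by (simp add: add_divide_distrib diff_divide_distrib)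
      also have "\<dots> = - (\<Sum>i\<in>{1..N}. ?p i * ?X i) / lam" unfolding e2 ..
      finally show ?thesis unfolding bi by (simp add: diff_diff_eq)
    qed
    ultimately show "- (\<Sum>i\<in>{1..N}. p (smp i) * ((ln (J i lam) - ln (J0 i) - Lp i lam / J0 i) / lam))
       - integral {t0..tf} (\<lambda>t. b t \<bullet> (xl lam t - x t)) / lam
      = (DKL N smp p (qstat t0 tf (psi eta Sig proj) (xl lam)) - DKL N smp p (qstat t0 tf (psi eta Sig proj) (xl 0))) / (lam - 0)"
      by simp
  qed
  have "((\<lambda>lam. (DKL N smp p (qstat t0 tf (psi eta Sig proj) (xl lam)) - DKL N smp p (qstat t0 tf (psi eta Sig proj) (xl 0))) / (lam - 0))
      \<longlongrightarrow> V) (at_right 0)"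
    by (rule Lim_transform_eventually[OF rhs_lim ev])
  then show ?thesis
    unfolding V_def by (simp add: has_field_derivative_iff)
qed


end
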